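(* Let $\|\cdot\|$ be a strictly convex norm on $\mathbb R^2$ that is $C^1$ on $\mathbb R^2\setminus\{0\}$. There exist an odd function $\varphi\in BV(\mathbb R/2\pi\mathbb Z)$ and a constant $c>0$ (depending only on $\mathsf B$) such that $\Delta_\varphi(m_1,m_2)\ge c\,\Lambda(m_1,m_2)$ for all $m_1,m_2\in\mathbb S^1$.
   Context: $\mathsf B=\{\|z\|<1\}$ normalized so that $\partial\mathsf B$ has length $2\pi$; $\gamma$ is its counterclockwise arc-length parametrization; $\mathbb R^2\cong\mathbb C$; $a\wedge b=a_1b_2-a_2b_1$. For odd $\varphi\in BV(\mathbb R/2\pi\mathbb Z)$, \[\Delta_\varphi(e^{i\theta_1},e^{i\theta_2})=\iint_{(\mathbb R/2\pi\mathbb Z)^2}\varphi(t-s)\,\gamma'(s-\tfrac\pi2)\wedge\gamma'(t-\tfrac\pi2)\big(\mathbf 1_{e^{is}\cdot e^{i\theta_2}>0}-\mathbf 1_{e^{is}\cdot e^{i\theta_1}>0}\big)\big(\mathbf 1_{e^{it}\cdot e^{i\theta_2}>0}-\mathbf 1_{e^{it}\cdot e^{i\theta_1}>0}\big)\,dt\,ds.\] $\alpha$ is continuous with $\gamma'=e^{i\alpha}$, and $\Lambda(e^{i\theta_1},e^{i\theta_2})=\int_{\theta_1}^{\theta_2}\int_{\theta_1}^{\theta_2}|\alpha(t)-\alpha(s)|\,dt\,ds$ for $|\theta_1-\theta_2|\le\pi$. *)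

theory Defs
  imports "HOL-Complex_Analysis.Complex_Analysis"
begin

definition wedge :: "complex \<Rightarrow> complex \<Rightarrow> real" where
  "wedge a b = Re a * Im b - Im a * Re b"

definition is_norm2 :: "(complex \<Rightarrow> real) \<Rightarrow> bool" where
  "is_norm2 N \<longleftrightarrow> (\<forall>x. 0 \<le> N x) \<and> (\<forall>x. N x = 0 \<longleftrightarrow> x = 0)
     \<and> (\<forall>(r::real) x. N (of_real r * x) = \<bar>r\<bar> * N x)
     \<and> (\<forall>x y. N (x + y) \<le> N x + N y)"

definition strictly_convex_norm :: "(complex \<Rightarrow> real) \<Rightarrow> bool" where
  "strictly_convex_norm N \<longleftrightarrow>
     (\<forall>x y (t::real). N x = 1 \<and> N y = 1 \<and> x \<noteq> y \<and> 0 < t \<and> t < 1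
        \<longrightarrow> N (of_real (1 - t) * x + of_real t * y) < 1)"

definition C1_off_origin :: "(complex \<Rightarrow> real) \<Rightarrow> bool" where
  "C1_off_origin N \<longleftrightarrow>
     (\<exists>D :: complex \<Rightarrow> (complex \<Rightarrow>\<^sub>L real).
        (\<forall>x. x \<noteq> 0 \<longrightarrow> (N has_derivative blinfun_apply (D x)) (at x))
        \<and> continuous_on (- {0}) D)"

definition bv_on :: "(real \<Rightarrow> real) \<Rightarrow> real \<Rightarrow> real \<Rightarrow> bool" where
  "bv_on f a b \<longleftrightarrow> (\<exists>M. \<forall>(n::nat) (x::nat \<Rightarrow> real).
      (\<forall>i\<le>n. a \<le> x i \<and> x i \<le> b) \<and> (\<forall>i<n. x i \<le> x (Suc i))
      \<longrightarrow> (\<Sum>i<n. \<bar>f (x (Suc i)) - f (x i)\<bar>) \<le> M)"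

text \<open>Delta_phi(e^{i th1}, e^{i th2}); the torus (R/2piZ)^2 is represented by [0,2pi]^2,
  and gamma'(u) = cis (alpha u).\<close>
definition Delta :: "(real \<Rightarrow> real) \<Rightarrow> (real \<Rightarrow> real) \<Rightarrow> real \<Rightarrow> real \<Rightarrow> real" where
  "Delta \<phi> \<alpha> \<theta>1 \<theta>2 = integral ({0..2*pi} \<times> {0..2*pi})
     (\<lambda>(s, t). \<phi> (t - s) * wedge (cis (\<alpha> (s - pi/2))) (cis (\<alpha> (t - pi/2)))
        * ((if cis s \<bullet> cis \<theta>2 > 0 then 1 else 0) - (if cis s \<bullet> cis \<theta>1 > 0 then 1 else 0))
        * ((if cis t \<bullet> cis \<theta>2 > 0 then 1 else 0) - (if cis t \<bullet> cis \<theta>1 > 0 then 1 else 0)))"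

text \<open>Lambda(e^{i th1}, e^{i th2}) for |th1 - th2| <= pi.\<close>
definition Lambda :: "(real \<Rightarrow> real) \<Rightarrow> real \<Rightarrow> real \<Rightarrow> real" where
  "Lambda \<alpha> \<theta>1 \<theta>2 = integral ({min \<theta>1 \<theta>2..max \<theta>1 \<theta>2} \<times> {min \<theta>1 \<theta>2..max \<theta>1 \<theta>2})
     (\<lambda>(s, t). \<bar>\<alpha> t - \<alpha> s\<bar>)"

end

theory Submission
  imports Defs
begin

lemma norm2_props:
  assumes "is_norm2 N"
  shows "N 0 = 0" "\<And>x. 0 \<le> N x" "\<And>r x. N (r *\<^sub>R x) = \<bar>r\<bar> * N x"
    "\<And>x y. N (x + y) \<le> N x + N y"
  using assms unfolding is_norm2_def scaleR_conv_of_real by auto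

lemma norm2_convex:
  assumes "is_norm2 N" "0 \<le> t" "t \<le> 1"
  shows "N ((1 - t) *\<^sub>R x + t *\<^sub>R y) \<le> (1 - t) * N x + t * N y"
proof -
  have "N ((1 - t) *\<^sub>R x + t *\<^sub>R y) \<le> N ((1 - t) *\<^sub>R x) + N (t *\<^sub>R y)"
    using norm2_props(4)[OF assms(1)] by blast
  also have "\<dots> = (1 - t) * N x + t * N y"
    using norm2_props(3)[OF assms(1)] assms(2,3) by simp
  finally show ?thesis .
qed

lemma deriv_le_aux:
  fixes h :: "real \<Rightarrow> real"
  assumes "(h has_real_derivative L) (at 0)"
    and "\<And>t. 0 < t \<Longrightarrow> t \<le> 1 \<Longrightarrow> h t - h 0 \<le> t * K"
  shows "L \<le> K"
proof -
  have "((\<lambda>y. (h y - h 0) / (y - 0)) \<longlongrightarrow> L) (at 0)"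
    using assms(1) has_field_derivative_iff by blast
  then have lim: "((\<lambda>y. (h y - h 0) / y) \<longlongrightarrow> L) (at_right 0)"
    by (simp add: filterlim_at_split)
  have ev: "eventually (\<lambda>y. (h y - h 0) / y \<le> K) (at_right (0::real))"
  proof -
    have "eventually (\<lambda>y. y \<in> {0<..<1}) (at_right (0::real))"
      by (rule eventually_at_right_real) simp
    then show ?thesis
    proof (rule eventually_mono)
      fix y :: real assume "y \<in> {0<..<1}"
      then show "(h y - h 0) / y \<le> K" using assms(2)[of y]
        by (simp add: divide_le_eq mult.commute)
    qed
  qed
  show ?thesis
    by (rule tendsto_le[OF trivial_limit_at_right_real tendsto_const lim ev])
qed

lemma subgrad:
  assumes N: "is_norm2 N" and d: "(N has_derivative l) (at p)"
  shows "N p + l (z - p) \<le> N z"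
proof -
  have lin: "linear l" using d has_derivative_linear by blast
  define h where "h t = N (p + t *\<^sub>R (z - p))" for t :: real
  have d1: "((\<lambda>t::real. p + t *\<^sub>R (z - p)) has_derivative (\<lambda>t. t *\<^sub>R (z - p))) (at 0)"
    by (auto intro!: derivative_eq_intros)
  have d2: "(N has_derivative l) (at ((\<lambda>t::real. p + t *\<^sub>R (z - p)) 0))"
    using d by simp
  have "(h has_derivative (\<lambda>t. l (t *\<^sub>R (z - p)))) (at 0)"
    unfolding h_def using diff_chain_at[OF d1 d2] by (simp add: o_def)
  moreover have "(\<lambda>t. l (t *\<^sub>R (z - p))) = (\<lambda>t. t * l (z - p))"
    using lin by (simp add: linear_scale)
  moreover have "(\<lambda>t. t * l (z - p)) = (*) (l (z - p))" by (auto simp: mult.commute)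
  ultimately have "(h has_real_derivative l (z - p)) (at 0)"
    by (simp add: has_field_derivative_def)
  moreover have "h t - h 0 \<le> t * (N z - N p)" if "0 < t" "t \<le> 1" for t
  proof -
    have "p + t *\<^sub>R (z - p) = (1 - t) *\<^sub>R p + t *\<^sub>R z" by (simp add: algebra_simps)
    then have "h t \<le> (1 - t) * N p + t * N z"
      unfolding h_def using norm2_convex[OF N, of t p z] that by simp
    then show ?thesis unfolding h_def by (simp add: algebra_simps)
  qed
  ultimately have "l (z - p) \<le> N z - N p" by (rule deriv_le_aux)
  then show ?thesis by simp
qed

lemma support_fun:
  assumes N: "is_norm2 N" and d: "(N has_derivative l) (at p)" and p1: "N p = 1"
  shows "l p = 1" "\<And>z. l z \<le> N z"
proof -
  have lin: "linear l" using d has_derivative_linear by blast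
  have a: "N p + l (0 - p) \<le> N 0" by (rule subgrad[OF N d])
  have b: "N p + l (2 *\<^sub>R p - p) \<le> N (2 *\<^sub>R p)" by (rule subgrad[OF N d])
  have "l (0 - p) = - l p" using lin by (simp add: linear_diff linear_0 linear_neg)
  moreover have "l (2 *\<^sub>R p - p) = l p" by (simp add: algebra_simps scaleR_2)
  ultimately show lp: "l p = 1" using a b p1 norm2_props[OF N] by simp
  fix z
  have "N p + l (z - p) \<le> N z" by (rule subgrad[OF N d])
  then show "l z \<le> N z" using lin lp p1 by (simp add: linear_diff)
qed

lemma support_strict:
  assumes N: "is_norm2 N" and sc: "strictly_convex_norm N" and d: "(N has_derivative l) (at p)"
    and p1: "N p = 1" and q1: "N q = 1" and lq: "l q = 1"
  shows "q = p"
proof (rule ccontr)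
  assume ne: "q \<noteq> p"
  have lin: "linear l" using d has_derivative_linear by blast
  have "N (of_real (1 - 1/2) * p + of_real (1/2) * q) < 1"
    using sc[unfolded strictly_convex_norm_def, rule_format, of p q "1/2"] ne p1 q1 by auto
  moreover have "l (of_real (1 - 1/2) * p + of_real (1/2) * q) = 1"
  proof -
    have e: "of_real (1 - 1/2) * p + of_real (1/2) * q = (1/2) *\<^sub>R p + (1/2) *\<^sub>R q"
      by (simp add: scaleR_conv_of_real)
    show ?thesis unfolding e using lin lq support_fun(1)[OF N d p1]
      by (simp add: linear_add linear_scale)
  qed
  moreover have "l (of_real (1 - 1/2) * p + of_real (1/2) * q) \<le> N (of_real (1 - 1/2) * p + of_real (1/2) * q)"
    by (rule support_fun(2)[OF N d p1])
  ultimately show False by linarith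
qed

lemma linear_wedge:
  fixes l :: "complex \<Rightarrow> real"
  assumes lin: "linear l" and g: "norm g = 1" and lg: "l g = 0"
  shows "l z = l (\<i> * g) * wedge g z"
proof -
  define a where "a = Re g"
  define b where "b = Im g"
  define x where "x = Re z"
  define y where "y = Im z"
  have gsq: "a^2 + b^2 = 1" using g unfolding a_def b_def cmod_def by simp
  define c where "c = a * x + b * y"
  define d where "d = a * y - b * x"
  have zz: "z = c *\<^sub>R g + d *\<^sub>R (\<i> * g)"
  proof (rule complex_eqI)
    have "c * a - d * b = x * (a^2 + b^2)" unfolding c_def d_def power2_eq_square by algebra
    then show "Re z = Re (c *\<^sub>R g + d *\<^sub>R (\<i> * g))" using gsq by (simp add: a_def b_def x_def)
    have "c * b + d * a = y * (a^2 + b^2)" unfolding c_def d_def power2_eq_square by algebra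
    then show "Im z = Im (c *\<^sub>R g + d *\<^sub>R (\<i> * g))" using gsq by (simp add: a_def b_def y_def)
  qed
  have "l z = c * l g + d * l (\<i> * g)"
    by (subst zz) (simp add: linear_add[OF lin] linear_scale[OF lin])
  moreover have "d = wedge g z" unfolding d_def wedge_def a_def b_def x_def y_def by simp
  ultimately show ?thesis using lg by simp
qed


lemma sign_const:
  fixes f :: "'a::topological_space \<Rightarrow> real"
  assumes "continuous_on S f" "connected S" "\<And>x. x \<in> S \<Longrightarrow> f x \<noteq> 0" "x \<in> S" "y \<in> S"
  shows "f x * f y > 0"
proof (rule ccontr)
  assume "\<not> f x * f y > 0"
  then have "f x * f y < 0" using assms(3)[OF assms(4)] assms(3)[OF assms(5)]
    by (metis linorder_neqE_linordered_idom mult_eq_0_iff)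
  then have "(f x < 0 \<and> 0 < f y) \<or> (f y < 0 \<and> 0 < f x)"
    by (simp add: mult_less_0_iff) blast
  moreover have c: "connected (f ` S)" by (rule connected_continuous_image[OF assms(1,2)])
  ultimately have "0 \<in> f ` S"
    using assms(4,5) unfolding connected_iff_interval
    by (metis image_eqI less_le)
  then show False using assms(3) by auto
qed

lemma local_to_global_mono:
  fixes f :: "real \<Rightarrow> real"
  assumes loc: "\<And>a b. a < b \<Longrightarrow> b < a + c \<Longrightarrow> f a < f b" and c: "c > 0"
  shows "strict_mono f"
proof -
  have *: "\<forall>a b. a < b \<and> b < a + real n * (c/2) \<longrightarrow> f a < f b" for n
  proof (induction n)
    case 0 then show ?case by auto
  next
    case (Suc n)
    show ?case
    proof (intro allI impI)
      fix a b assume ab: "a < b \<and> b < a + real (Suc n) * (c/2)"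
      show "f a < f b"
      proof (cases "b < a + c")
        case True then show ?thesis using loc ab by auto
      next
        case False
        have "f a < f (a + c/2)" using loc c by auto
        moreover have "f (a + c/2) < f b"
        proof -
          have "a + c/2 < b" using False c by linarith
          moreover have "b < (a + c/2) + real n * (c/2)" using ab by (simp add: field_simps)
          ultimately show ?thesis using Suc.IH by blast
        qed
        ultimately show ?thesis by simp
      qed
    qed
  qed
  show ?thesis
  proof (rule strict_monoI)
    fix a b :: real assume "a < b"
    obtain n where "(b - a) / (c/2) < real n" using reals_Archimedean2 by blast
    then have "b - a < real n * (c/2)" using c by (simp add: divide_less_eq)
    then show "f a < f b" using *[of n] \<open>a < b\<close> by auto
  qed
qed

locale curve =
  fixes N :: "complex \<Rightarrow> real" and \<gamma> :: "real \<Rightarrow> complex" and \<alpha> :: "real \<Rightarrow> real"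
    and D :: "complex \<Rightarrow> (complex \<Rightarrow>\<^sub>L real)"
  assumes nrm: "is_norm2 N" and sc: "strictly_convex_norm N"
    and Dd: "\<And>x. x \<noteq> 0 \<Longrightarrow> (N has_derivative blinfun_apply (D x)) (at x)"
    and per: "\<And>t. \<gamma> (t + 2*pi) = \<gamma> t"
    and inj: "inj_on \<gamma> {0..<2*pi}"
    and rng: "range \<gamma> = {z. N z = 1}"
    and der: "\<And>t. (\<gamma> has_vector_derivative cis (\<alpha> t)) (at t)"
    and acont: "continuous_on UNIV \<alpha>"
begin

lemma N1: "N (\<gamma> t) = 1" using rng by auto

lemma gne0: "\<gamma> t \<noteq> 0" using N1[of t] norm2_props(1)[OF nrm] by auto

lemma Dg: "(N has_derivative blinfun_apply (D (\<gamma> u))) (at (\<gamma> u))" using Dd gne0 by blast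

lemma gcont: "continuous_on UNIV \<gamma>"
  using der has_vector_derivative_continuous continuous_at_imp_continuous_on by blast

lemma ell_tan: "blinfun_apply (D (\<gamma> u)) (cis (\<alpha> u)) = 0"
proof -
  have d1: "(\<gamma> has_derivative (\<lambda>x. x *\<^sub>R cis (\<alpha> u))) (at u)"
    using der[of u] by (simp add: has_vector_derivative_def)
  have "((\<lambda>t. N (\<gamma> t)) has_derivative (\<lambda>x. blinfun_apply (D (\<gamma> u)) (x *\<^sub>R cis (\<alpha> u)))) (at u)"
    using diff_chain_at[OF d1 Dg[of u]] by (simp add: o_def)
  moreover have "(\<lambda>t. N (\<gamma> t)) = (\<lambda>t. 1)" using N1 by auto
  ultimately have "((\<lambda>t::real. 1::real) has_derivative (\<lambda>x. blinfun_apply (D (\<gamma> u)) (x *\<^sub>R cis (\<alpha> u)))) (at u)"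
    by simp
  moreover have "((\<lambda>t::real. 1::real) has_derivative (\<lambda>x. 0)) (at u)" by simp
  ultimately have "(\<lambda>x. blinfun_apply (D (\<gamma> u)) (x *\<^sub>R cis (\<alpha> u))) = (\<lambda>x. 0)"
    using has_derivative_unique by blast
  then show ?thesis by (metis scaleR_one)
qed

definition "\<kappa> u = blinfun_apply (D (\<gamma> u)) (\<i> * cis (\<alpha> u))"
definition "w u = wedge (cis (\<alpha> u)) (\<gamma> u)"

lemma ellrep: "blinfun_apply (D (\<gamma> u)) z = \<kappa> u * wedge (cis (\<alpha> u)) z"
  unfolding \<kappa>_def
  by (rule linear_wedge[OF has_derivative_linear[OF Dg] _ ell_tan]) simp

lemma kw: "\<kappa> u * w u = 1"
  using support_fun(1)[OF nrm Dg N1] ellrep[of u "\<gamma> u"] unfolding w_def by simp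

lemma wne: "w u \<noteq> 0" using kw[of u] by auto

lemma wcont: "continuous_on UNIV w"
proof -
  have "continuous_on UNIV (\<lambda>u. cis (\<alpha> u))"
    by (rule continuous_on_cis[OF acont])
  then show ?thesis unfolding w_def wedge_def
    by (intro continuous_intros gcont acont)
qed

lemma wsign: "w u * w v > 0"
  by (rule sign_const[OF wcont]) (auto simp: wne)

lemma tangent_point:
  assumes "cis (\<alpha> u) = cis (\<alpha> v)"
  shows "\<gamma> u = \<gamma> v"
proof -
  let ?g = "cis (\<alpha> u)"
  have lu: "blinfun_apply (D (\<gamma> u)) z = \<kappa> u * wedge ?g z" for z by (rule ellrep)
  have lv: "blinfun_apply (D (\<gamma> v)) z = \<kappa> v * wedge ?g z" for z using ellrep[of v z] assms by simp
  have wu: "wedge ?g (\<gamma> u) = w u" unfolding w_def ..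
  have wv: "wedge ?g (\<gamma> v) = w v" unfolding w_def using assms by simp
  have ku: "\<kappa> u = 1 / w u" using kw[of u] wne[of u] by (simp add: field_simps)
  have kv: "\<kappa> v = 1 / w v" using kw[of v] wne[of v] by (simp add: field_simps)
  have a: "\<kappa> u * w v \<le> 1" using support_fun(2)[OF nrm Dg N1, of u "\<gamma> v"] lu[of "\<gamma> v"] wv N1 by simp
  have b: "\<kappa> v * w u \<le> 1" using support_fun(2)[OF nrm Dg N1, of v "\<gamma> u"] lv[of "\<gamma> u"] wu N1 by simp
  have pos: "w u * w v > 0" by (rule wsign)
  have r1: "w v / w u \<le> 1" using a ku by simp
  have r2: "w u / w v \<le> 1" using b kv by simp
  have "w u = w v"
  proof (cases "w u > 0")
    case True
    then have "w v > 0" using pos by (simp add: zero_less_mult_iff)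
    then show ?thesis using r1 r2 True by (simp add: divide_le_eq)
  next
    case False
    then have "w u < 0" using wne[of u] by linarith
    then have "w v < 0" using pos by (simp add: zero_less_mult_iff)
    then show ?thesis using r1 r2 \<open>w u < 0\<close> by (simp add: divide_le_eq)
  qed
  then have "blinfun_apply (D (\<gamma> u)) (\<gamma> v) = 1" using lu[of "\<gamma> v"] wv ku wne[of u] by simp
  then show ?thesis using support_strict[OF nrm sc Dg N1 N1] by metis
qed

lemma per_nat: "\<gamma> (t + 2*pi*real n) = \<gamma> t"
proof (induction n arbitrary: t)
  case 0 then show ?case by simp
next
  case (Suc n)
  have "\<gamma> (t + 2*pi*real (Suc n)) = \<gamma> ((t + 2*pi*real n) + 2*pi)" by (simp add: algebra_simps)
  also have "\<dots> = \<gamma> t" using per Suc.IH by simp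
  finally show ?case .
qed

lemma per_int: "\<gamma> (t + 2*pi * of_int k) = \<gamma> t"
proof (cases k rule: int_cases)
  case (nonneg n) then show ?thesis using per_nat by simp
next
  case (neg n)
  have "\<gamma> (t + 2*pi * of_int k) = \<gamma> ((t + 2*pi * of_int k) + 2*pi*real (Suc n))" by (rule per_nat[symmetric])
  also have "(t + 2*pi * of_int k) + 2*pi*real (Suc n) = t"
  proof -
    have "(of_int k :: real) + 1 + real n = 0" using neg by simp
    moreover have "(t + 2*pi * of_int k) + 2*pi*real (Suc n) = t + 2*pi*(of_int k + 1 + real n)"
      by (simp add: algebra_simps)
    ultimately show ?thesis by simp
  qed
  finally show ?thesis .
qed

lemma win_inj:
  assumes "u < v" "v < u + 2*pi"
  shows "\<gamma> u \<noteq> \<gamma> v"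
proof
  assume eq: "\<gamma> u = \<gamma> v"
  define ku where "ku = \<lfloor>u / (2*pi)\<rfloor>"
  define kv where "kv = \<lfloor>v / (2*pi)\<rfloor>"
  have pp: "0 < 2*pi" by simp
  have u1: "of_int ku \<le> u / (2*pi)" "u / (2*pi) < of_int ku + 1" unfolding ku_def by linarith+
  have v1: "of_int kv \<le> v / (2*pi)" "v / (2*pi) < of_int kv + 1" unfolding kv_def by linarith+
  have u2: "0 \<le> u - 2*pi * of_int ku" "u - 2*pi * of_int ku < 2*pi"
    using u1 pp by (simp_all add: field_simps)
  have v2: "0 \<le> v - 2*pi * of_int kv" "v - 2*pi * of_int kv < 2*pi"
    using v1 pp by (simp_all add: field_simps)
  have "\<gamma> (u - 2*pi * of_int ku) = \<gamma> u" using per_int[of "u - 2*pi * of_int ku" ku] by simp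
  moreover have "\<gamma> (v - 2*pi * of_int kv) = \<gamma> v" using per_int[of "v - 2*pi * of_int kv" kv] by simp
  ultimately have "u - 2*pi * of_int ku = v - 2*pi * of_int kv"
    using inj eq u2 v2 unfolding inj_on_def by auto
  define m where "m = (of_int (kv - ku) :: real)"
  have "v - u = 2*pi * (of_int kv - of_int ku)" using \<open>u - 2*pi * of_int ku = v - 2*pi * of_int kv\<close> by (simp add: algebra_simps)
  then have "v - u = 2*pi * m" unfolding m_def by simp
  then have a1: "0 < 2*pi * m" "2*pi * m < 2*pi * 1" using assms by linarith+
  have "0 < m" using a1(1) pp by (simp add: zero_less_mult_iff)
  then have "0 < kv - ku" unfolding m_def by simp
  moreover have "m < 1" using a1(2) pp mult_less_cancel_left_pos by blast
  then have "kv - ku < 1" unfolding m_def by simp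
  ultimately show False by linarith
qed

lemma alpha_ne: "u < v \<Longrightarrow> v < u + 2*pi \<Longrightarrow> \<alpha> u \<noteq> \<alpha> v"
  using win_inj tangent_point by metis

lemma sign_alpha: "\<exists>\<epsilon>::real. (\<epsilon> = 1 \<or> \<epsilon> = -1) \<and> (\<forall>a b. a < b \<and> b < a + 2*pi \<longrightarrow> 0 < \<epsilon> * (\<alpha> b - \<alpha> a))"
proof -
  define S where "S = (UNIV :: real set) \<times> {0<..<2*pi}"
  define F where "F p = \<alpha> (fst p + snd p) - \<alpha> (fst p)" for p :: "real \<times> real"
  have cS: "connected S" unfolding S_def
    by (intro convex_connected convex_Times) auto
  have cF: "continuous_on S F" unfolding F_def
    by (intro continuous_intros continuous_on_compose2[OF acont]) auto
  have nz: "F p \<noteq> 0" if "p \<in> S" for p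
    using that alpha_ne[of "fst p" "fst p + snd p"] unfolding S_def F_def by auto
  have p0: "(0, pi) \<in> S" unfolding S_def by auto
  define \<epsilon> where "\<epsilon> = (if F (0, pi) > 0 then 1 else (-1::real))"
  have "0 < \<epsilon> * (\<alpha> b - \<alpha> a)" if "a < b" "b < a + 2*pi" for a b
  proof -
    have pS: "(a, b - a) \<in> S" unfolding S_def using that by auto
    have "F (a, b - a) * F (0, pi) > 0" by (rule sign_const[OF cF cS nz pS p0])
    moreover have "F (a, b - a) = \<alpha> b - \<alpha> a" unfolding F_def by simp
    moreover have "F (0, pi) \<noteq> 0" using nz p0 by blast
    ultimately show ?thesis unfolding \<epsilon>_def by (auto simp: zero_less_mult_iff)
  qed
  then show ?thesis unfolding \<epsilon>_def by (intro exI[of _ \<epsilon>]) (auto simp: \<epsilon>_def)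
qed

lemma mono_alpha: "\<exists>\<epsilon>::real. (\<epsilon> = 1 \<or> \<epsilon> = -1) \<and> strict_mono (\<lambda>u. \<epsilon> * \<alpha> u)"
proof -
  obtain \<epsilon> :: real where e: "\<epsilon> = 1 \<or> \<epsilon> = -1" and s: "\<forall>a b. a < b \<and> b < a + 2*pi \<longrightarrow> 0 < \<epsilon> * (\<alpha> b - \<alpha> a)"
    using sign_alpha by blast
  have "strict_mono (\<lambda>u. \<epsilon> * \<alpha> u)"
    by (rule local_to_global_mono[where c="2*pi"]) (use s in \<open>auto simp: algebra_simps\<close>)
  then show ?thesis using e by blast
qed

lemma cis_alpha_per: "cis (\<alpha> (u + 2*pi)) = cis (\<alpha> u)"
proof -
  have d1: "((\<lambda>t. t + 2*pi) has_vector_derivative 1) (at u)"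
    by (simp add: has_vector_derivative_def) (auto intro!: derivative_eq_intros)
  have "((\<gamma> \<circ> (\<lambda>t. t + 2*pi)) has_vector_derivative (1 *\<^sub>R cis (\<alpha> (u + 2*pi)))) (at u)"
    by (rule vector_diff_chain_at[OF d1]) (simp add: der)
  moreover have "\<gamma> \<circ> (\<lambda>t. t + 2*pi) = \<gamma>" using per by (auto simp: o_def)
  ultimately have "(\<gamma> has_vector_derivative cis (\<alpha> (u + 2*pi))) (at u)" by simp
  then show ?thesis using der[of u] vector_derivative_unique_at by blast
qed

lemma per_incr: "\<exists>K. \<forall>u. \<alpha> (u + 2*pi) = \<alpha> u + K"
proof -
  define h where "h u = \<alpha> (u + 2*pi) - \<alpha> u" for u
  have mult: "\<exists>k::int. h u = of_int k * 2 * pi" for u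
  proof -
    have "cis (h u) = 1" unfolding h_def using cis_alpha_per[of u]
      by (simp add: cis_divide[symmetric])
    then have "cos (h u) = 1" by (metis cis.sel(1) one_complex.sel(1))
    then show ?thesis using cos_one_2pi_int by blast
  qed
  have ch: "continuous_on UNIV h" unfolding h_def
    by (intro continuous_intros continuous_on_compose2[OF acont]) auto
  have cc: "connected (h ` UNIV)" by (rule connected_continuous_image[OF ch]) simp
  have "h u = h 0" for u
  proof (rule ccontr)
    assume ne: "h u \<noteq> h 0"
    obtain k1 where k1: "h u = of_int k1 * 2 * pi" using mult by blast
    obtain k0 where k0: "h 0 = of_int k0 * 2 * pi" using mult by blast
    define lo where "lo = min (h u) (h 0)"
    define hi where "hi = max (h u) (h 0)"
    have "\<exists>k. lo = of_int k * 2 * pi" unfolding lo_def min_def using k1 k0 by auto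
    then obtain klo where klo: "lo = of_int klo * 2 * pi" by blast
    have "\<exists>k. hi = of_int k * 2 * pi" unfolding hi_def max_def using k1 k0 by auto
    then obtain khi where khi: "hi = of_int khi * 2 * pi" by blast
    have "lo < hi" unfolding lo_def hi_def using ne by auto
    then have "klo < khi" using klo khi by (simp add: mult_less_cancel_right)
    then have "klo + 1 \<le> khi" by linarith
    then have "of_int klo + 1 \<le> (of_int khi :: real)" by linarith
    then have "(of_int klo + 1) * (2*pi) \<le> of_int khi * (2*pi)" by (rule mult_right_mono) simp
    then have "lo + 2*pi \<le> hi" using klo khi by (simp add: algebra_simps)
    then have "lo + pi \<le> hi" using pi_gt_zero by linarith
    moreover have "lo \<in> h ` UNIV" "hi \<in> h ` UNIV" unfolding lo_def hi_def by (auto simp: min_def max_def)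
    ultimately have "lo + pi \<in> h ` UNIV"
      using cc[unfolded connected_iff_interval, rule_format, of lo hi "lo + pi"] pi_gt_zero by simp
    then obtain u' where "lo + pi = h u'" by blast
    then obtain j where "lo + pi = of_int j * 2 * pi" using mult by metis
    then have "of_int klo * 2 * pi + pi = of_int j * 2 * pi" using klo by simp
    then have "(of_int (2 * klo + 1) :: real) * pi = of_int (2 * j) * pi" by (simp add: algebra_simps)
    then have "(of_int (2 * klo + 1) :: real) = of_int (2 * j)"
      using mult_right_cancel[of pi "of_int (2 * klo + 1)" "of_int (2 * j)"] pi_neq_zero by blast
    then have "2 * klo + 1 = 2 * j" by (simp only: of_int_eq_iff)
    then show False by presburger
  qed
  then show ?thesis unfolding h_def by (intro exI[of _ "h 0"]) (auto simp: h_def algebra_simps)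
qed

end

lemma set_int_bdd:
  fixes f :: "'a::euclidean_space \<Rightarrow> real"
  assumes [measurable]: "f \<in> borel_measurable borel" and bnd: "\<And>x. \<bar>f x\<bar> \<le> B"
  shows "set_integrable lborel (cbox a b) f"
  unfolding set_integrable_def
proof (rule integrableI_bounded_set_indicator[where B=B])
  show "emeasure lborel (cbox a b) < \<infinity>" by (rule emeasure_lborel_cbox_finite)
qed (auto simp: bnd)

lemma bdd_integrable:
  fixes f :: "real \<Rightarrow> real"
  assumes "f \<in> borel_measurable borel" and "\<And>x. \<bar>f x\<bar> \<le> B"
  shows "f integrable_on {a..b}"
  using set_borel_integral_eq_integral(1)[OF set_int_bdd[OF assms, of a b]] by simp

lemma fubini_box:
  fixes g :: "real \<times> real \<Rightarrow> real"
  assumes gm[measurable]: "g \<in> borel_measurable borel" and bnd: "\<And>p. \<bar>g p\<bar> \<le> B"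
    and ab: "a \<le> b" and cd: "c \<le> d"
  shows "integral ({a..b} \<times> {c..d}) g = integral {a..b} (\<lambda>x. integral {c..d} (\<lambda>y. g (x, y)))"
    and "integral ({a..b} \<times> {c..d}) g = integral {c..d} (\<lambda>y. integral {a..b} (\<lambda>x. g (x, y)))"
    and "(\<lambda>x. integral {c..d} (\<lambda>y. g (x, y))) integrable_on {a..b}"
    and "(\<lambda>y. integral {a..b} (\<lambda>x. g (x, y))) integrable_on {c..d}"
proof -
  have S: "{a..b} \<times> {c..d} = cbox (a, c) (b, d)" by (simp add: cbox_Pair_eq)
  have B0: "0 \<le> B" using bnd[of "(0,0)"] by linarith
  define F where "F p = indicator ({a..b} \<times> {c..d}) p * g p" for p
  have Fm[measurable]: "F \<in> borel_measurable borel" unfolding F_def S by measurable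
  have si: "set_integrable lborel ({a..b} \<times> {c..d}) g" unfolding S by (rule set_int_bdd[OF gm bnd])
  have I0: "integral ({a..b} \<times> {c..d}) g = integral\<^sup>L lborel F"
    using set_borel_integral_eq_integral(2)[OF si] unfolding set_lebesgue_integral_def F_def by simp
  have intF: "integrable lborel F" using si unfolding set_integrable_def F_def by simp
  have intF2: "integrable (lborel \<Otimes>\<^sub>M lborel) F" using intF by (simp add: lborel_prod)
  have F2: "integral\<^sup>L lborel F = integral\<^sup>L (lborel \<Otimes>\<^sub>M lborel) F" by (simp add: lborel_prod)
  have gx[measurable]: "(\<lambda>y. g (x, y)) \<in> borel_measurable borel" for x by measurable
  have gy[measurable]: "(\<lambda>x. g (x, y)) \<in> borel_measurable borel" for y by measurable
  define I1 where "I1 x = integral {c..d} (\<lambda>y. g (x, y))" for x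
  define I2 where "I2 y = integral {a..b} (\<lambda>x. g (x, y))" for y
  have inner1: "(LBINT y. F (x, y)) = indicator {a..b} x * I1 x" for x
  proof -
    have "(LBINT y. F (x, y)) = (LBINT y. indicator {a..b} x * (indicator {c..d} y * g (x, y)))"
      unfolding F_def by (intro Bochner_Integration.integral_cong) (auto simp: indicator_def)
    also have "\<dots> = indicator {a..b} x * (LBINT y. indicator {c..d} y * g (x, y))" by simp
    also have "(LBINT y. indicator {c..d} y * g (x, y)) = I1 x"
      using set_borel_integral_eq_integral(2)[OF set_int_bdd[OF gx bnd, of c d]]
      unfolding set_lebesgue_integral_def I1_def by simp
    finally show ?thesis .
  qed
  have inner2: "(LBINT x. F (x, y)) = indicator {c..d} y * I2 y" for y
  proof -
    have "(LBINT x. F (x, y)) = (LBINT x. indicator {c..d} y * (indicator {a..b} x * g (x, y)))"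
      unfolding F_def by (intro Bochner_Integration.integral_cong) (auto simp: indicator_def)
    also have "\<dots> = indicator {c..d} y * (LBINT x. indicator {a..b} x * g (x, y))" by simp
    also have "(LBINT x. indicator {a..b} x * g (x, y)) = I2 y"
      using set_borel_integral_eq_integral(2)[OF set_int_bdd[OF gy bnd, of a b]]
      unfolding set_lebesgue_integral_def I2_def by simp
    finally show ?thesis .
  qed
  have I1e: "I1 x = (LBINT y. indicator {c..d} y * g (x, y))" for x
      using set_borel_integral_eq_integral(2)[OF set_int_bdd[OF gx bnd, of c d]]
      unfolding set_lebesgue_integral_def I1_def by simp
  have I2e: "I2 y = (LBINT x. indicator {a..b} x * g (x, y))" for y
      using set_borel_integral_eq_integral(2)[OF set_int_bdd[OF gy bnd, of a b]]
      unfolding set_lebesgue_integral_def I2_def by simp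
  have I1m[measurable]: "I1 \<in> borel_measurable borel" unfolding I1e by measurable
  have I2m[measurable]: "I2 \<in> borel_measurable borel" unfolding I2e by measurable
  have I1b: "\<bar>I1 x\<bar> \<le> B * (d - c)" for x
  proof -
    have int: "(\<lambda>y. g (x, y)) integrable_on cbox c d"
      using set_borel_integral_eq_integral(1)[OF set_int_bdd[OF gx bnd, of c d]] by simp
    have "norm (integral (cbox c d) (\<lambda>y. g (x, y))) \<le> B * measure lborel (cbox c d)"
      by (rule has_integral_bound[OF B0 integrable_integral[OF int]]) (use bnd in auto)
    then show ?thesis unfolding I1_def using cd by simp
  qed
  have I2b: "\<bar>I2 y\<bar> \<le> B * (b - a)" for y
  proof -
    have int: "(\<lambda>x. g (x, y)) integrable_on cbox a b"
      using set_borel_integral_eq_integral(1)[OF set_int_bdd[OF gy bnd, of a b]] by simp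
    have "norm (integral (cbox a b) (\<lambda>x. g (x, y))) \<le> B * measure lborel (cbox a b)"
      by (rule has_integral_bound[OF B0 integrable_integral[OF int]]) (use bnd in auto)
    then show ?thesis unfolding I2_def using ab by simp
  qed
  have s1: "set_integrable lborel (cbox a b) I1" by (rule set_int_bdd[OF I1m I1b])
  have s2: "set_integrable lborel (cbox c d) I2" by (rule set_int_bdd[OF I2m I2b])
  have e1: "integral\<^sup>L (lborel \<Otimes>\<^sub>M lborel) F = integral {a..b} I1"
  proof -
    have "integral\<^sup>L (lborel \<Otimes>\<^sub>M lborel) F = (LBINT x. LBINT y. F (x, y))"
      using lborel_pair.integral_fst'[OF intF2] by simp
    also have "\<dots> = (LBINT x. indicator {a..b} x * I1 x)" by (simp add: inner1)
    also have "\<dots> = integral {a..b} I1"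
      using set_borel_integral_eq_integral(2)[OF s1] unfolding set_lebesgue_integral_def by simp
    finally show ?thesis .
  qed
  have e2: "integral\<^sup>L (lborel \<Otimes>\<^sub>M lborel) F = integral {c..d} I2"
  proof -
    have "integral\<^sup>L (lborel \<Otimes>\<^sub>M lborel) F = (LBINT y. LBINT x. F (x, y))"
    proof -
      have i3: "integrable (lborel \<Otimes>\<^sub>M lborel) (\<lambda>(x, y). F (x, y))" using intF2 by (simp add: split_def)
      show ?thesis using lborel_pair.integral_snd[OF i3] by (simp add: split_def)
    qed
    also have "\<dots> = (LBINT y. indicator {c..d} y * I2 y)" by (simp add: inner2)
    also have "\<dots> = integral {c..d} I2"
      using set_borel_integral_eq_integral(2)[OF s2] unfolding set_lebesgue_integral_def by simp
    finally show ?thesis .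
  qed
  show "integral ({a..b} \<times> {c..d}) g = integral {a..b} (\<lambda>x. integral {c..d} (\<lambda>y. g (x, y)))"
    using I0 F2 e1 unfolding I1_def by simp
  show "integral ({a..b} \<times> {c..d}) g = integral {c..d} (\<lambda>y. integral {a..b} (\<lambda>x. g (x, y)))"
    using I0 F2 e2 unfolding I2_def by simp
  show "(\<lambda>x. integral {c..d} (\<lambda>y. g (x, y))) integrable_on {a..b}"
    using set_borel_integral_eq_integral(1)[OF s1] unfolding I1_def by simp
  show "(\<lambda>y. integral {a..b} (\<lambda>x. g (x, y))) integrable_on {c..d}"
    using set_borel_integral_eq_integral(1)[OF s2] unfolding I2_def by simp
qed


lemma per_int_gen:
  fixes p :: "real \<Rightarrow> 'b"
  assumes per: "\<And>x. p (x + 2*pi) = p x"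
  shows "p (x + 2*pi * of_int k) = p x"
proof -
  have n: "p (y + 2*pi * real n) = p y" for y n
  proof (induction n arbitrary: y)
    case 0 then show ?case by simp
  next
    case (Suc n)
    have "p (y + 2*pi * real (Suc n)) = p ((y + 2*pi * real n) + 2*pi)" by (simp add: algebra_simps)
    also have "\<dots> = p y" using per Suc.IH by simp
    finally show ?case .
  qed
  show ?thesis
  proof (cases k rule: int_cases)
    case (nonneg n) then show ?thesis using n by simp
  next
    case (neg n)
    have "p (x + 2*pi * of_int k) = p ((x + 2*pi * of_int k) + 2*pi * real (Suc n))" by (rule n[symmetric])
    also have "(x + 2*pi * of_int k) + 2*pi * real (Suc n) = x"
    proof -
      have "(of_int k :: real) + 1 + real n = 0" using neg by simp
      moreover have "(x + 2*pi * of_int k) + 2*pi*real (Suc n) = x + 2*pi*(of_int k + 1 + real n)"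
        by (simp add: algebra_simps)
      ultimately show ?thesis by simp
    qed
    finally show ?thesis .
  qed
qed

lemma integral_periodic_shift0:
  fixes p :: "real \<Rightarrow> real"
  assumes per: "\<And>x. p (x + 2*pi) = p x" and int: "\<And>a b. p integrable_on {a..b}"
    and c: "0 \<le> c" "c \<le> 2*pi"
  shows "integral {c..c+2*pi} p = integral {0..2*pi} p"
proof -
  have "integral {c..c+2*pi} p = integral {c..2*pi} p + integral {2*pi..c+2*pi} p"
    using Henstock_Kurzweil_Integration.integral_combine[where a=c and c="2*pi" and b="c+2*pi" and f=p] c int by simp
  moreover have "integral {2*pi..c+2*pi} p = integral {0..c} p"
  proof -
    have "integral {2*pi - 2*pi..c+2*pi - 2*pi} (\<lambda>x. p (x + 2*pi)) = integral {2*pi..c+2*pi} p"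
      by (rule integral_shift_real_ivl)
    then show ?thesis using per by simp
  qed
  moreover have "integral {0..c} p + integral {c..2*pi} p = integral {0..2*pi} p"
    using Henstock_Kurzweil_Integration.integral_combine[where a=0 and c=c and b="2*pi" and f=p] c int by simp
  ultimately show ?thesis by simp
qed

lemma integral_periodic_shift:
  fixes p :: "real \<Rightarrow> real"
  assumes per: "\<And>x. p (x + 2*pi) = p x" and int: "\<And>a b. p integrable_on {a..b}"
  shows "integral {c..c+2*pi} p = integral {0..2*pi} p"
proof -
  define k where "k = \<lfloor>c / (2*pi)\<rfloor>"
  define c' where "c' = c - 2*pi * of_int k"
  have pp: "0 < 2*pi" by simp
  have k1: "of_int k \<le> c / (2*pi)" "c / (2*pi) < of_int k + 1" unfolding k_def by linarith+
  have c1: "0 \<le> c'" "c' \<le> 2*pi" using k1 pp unfolding c'_def by (simp_all add: field_simps)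
  have "integral {c..c+2*pi} p = integral {c' .. c'+2*pi} (\<lambda>x. p (x + 2*pi * of_int k))"
    using integral_shift_real_ivl[where a=c and b="c+2*pi" and c="2*pi * of_int k" and f=p] unfolding c'_def by (simp add: algebra_simps)
  also have "\<dots> = integral {c' .. c'+2*pi} p" using per_int_gen[where p=p, OF per] by simp
  also have "\<dots> = integral {0..2*pi} p" by (rule integral_periodic_shift0[OF per int c1])
  finally show ?thesis .
qed


lemma sin_add_2pi_int: "sin (y + 2*pi * of_int k) = sin y"
  by (rule per_int_gen[where p=sin]) simp

lemma periodic_reduce:
  fixes p :: "real \<Rightarrow> 'b"
  assumes per: "\<And>x. p (x + 2*pi) = p x"
  shows "\<exists>u'\<in>{0..2*pi}. p u = p u'"
proof -
  define k where "k = \<lfloor>u / (2*pi)\<rfloor>"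
  have pp: "0 < 2*pi" by simp
  have k1: "of_int k \<le> u / (2*pi)" "u / (2*pi) < of_int k + 1" unfolding k_def by linarith+
  have c1: "0 \<le> u - 2*pi * of_int k" "u - 2*pi * of_int k \<le> 2*pi"
    using k1 pp by (simp_all add: field_simps)
  have "p u = p ((u - 2*pi * of_int k) + 2*pi * of_int k)" by simp
  also have "\<dots> = p (u - 2*pi * of_int k)" by (rule per_int_gen[where p=p, OF per])
  finally show ?thesis using c1 by auto
qed

lemma sinpos:
  fixes y :: real
  assumes "-2*pi < y" "y \<le> 2*pi"
  shows "sin y > 0 \<longleftrightarrow> (0 < y \<and> y < pi) \<or> y < -pi"
proof (cases "0 < y \<and> y < pi")
  case True then show ?thesis using sin_gt_zero by auto
next
  case F: False
  show ?thesis
  proof (cases "y < -pi")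
    case True
    have "sin y = sin (y + 2*pi)" by simp
    moreover have "sin (y + 2*pi) > 0" using True assms by (intro sin_gt_zero) auto
    ultimately show ?thesis using True by simp
  next
    case False
    have "sin y \<le> 0"
    proof (cases "y \<ge> pi")
      case True
      have "sin y = - sin (y - pi)" by (metis diff_add_cancel sin_periodic_pi)
      moreover have "sin (y - pi) \<ge> 0" using True assms by (intro sin_ge_zero) auto
      ultimately show ?thesis by simp
    next
      case False
      then have "y \<le> 0" "-pi \<le> y" using F \<open>\<not> y < -pi\<close> by auto
      then have "sin (-y) \<ge> 0" by (intro sin_ge_zero) auto
      then show ?thesis by simp
    qed
    then show ?thesis using F False by auto
  qed
qed

lemma sin_ge_half:
  fixes y :: real
  assumes "0 \<le> y" "y \<le> 1"
  shows "y / 2 \<le> sin y"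
proof -
  define h where "h t = sin t - t / 2" for t :: real
  have c1: "cos t \<ge> 1/2" if "0 \<le> t" "t \<le> 1" for t :: real
  proof -
    have "pi / 3 > 1" using pi_gt3 by simp
    then have "cos (pi/3) < cos t" using that by (intro cos_monotone_0_pi) auto
    then show ?thesis using cos_60 by simp
  qed
  have "h 0 \<le> h y"
  proof (rule DERIV_nonneg_imp_nondecreasing[of 0 y h])
    show "0 \<le> y" by fact
    fix t assume t: "0 \<le> t" "t \<le> y"
    show "\<exists>d. (h has_real_derivative d) (at t) \<and> 0 \<le> d"
    proof -
      have "t \<le> 1" using t assms by linarith
      then have "cos t \<ge> 1/2" using c1 t by blast
      moreover have "(h has_real_derivative (cos t - 1/2)) (at t)" unfolding h_def
        by (auto intro!: derivative_eq_intros)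
      ultimately show ?thesis by (intro exI[of _ "cos t - 1/2"]) auto
    qed
  qed
  then show ?thesis unfolding h_def by simp
qed

locale core =
  fixes \<beta> :: "real \<Rightarrow> real" and kK :: int
  assumes bmono: "strict_mono \<beta>" and bcont: "continuous_on UNIV \<beta>"
    and bper: "\<And>u. \<beta> (u + 2*pi) = \<beta> u + 2*pi * of_int kK"
begin

lemma bmono_le: "u \<le> v \<Longrightarrow> \<beta> u \<le> \<beta> v"
  using bmono strict_mono_less_eq by blast

lemma bmono_lt: "u < v \<Longrightarrow> \<beta> u < \<beta> v"
  using bmono strict_mono_less by blast

lemma incr_per: "\<beta> (u + 2*pi + y) - \<beta> (u + 2*pi) = \<beta> (u + y) - \<beta> u"
proof -
  have "\<beta> (u + 2*pi + y) = \<beta> ((u + y) + 2*pi)" by (simp add: algebra_simps)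
  then show ?thesis using bper by simp
qed

lemma incr_bounds:
  assumes "0 < y"
  shows "\<exists>mn mx. 0 < mn \<and> (\<forall>u. mn \<le> \<beta> (u + y) - \<beta> u \<and> \<beta> (u + y) - \<beta> u \<le> mx)"
proof -
  define h where "h u = \<beta> (u + y) - \<beta> u" for u
  have hper: "h (u + 2*pi) = h u" for u unfolding h_def using incr_per[of u y] by (simp add: algebra_simps)
  have hc: "continuous_on {0..2*pi} h" unfolding h_def
    by (intro continuous_intros continuous_on_compose2[OF bcont]) auto
  obtain a where a: "a \<in> {0..2*pi}" "\<forall>z\<in>{0..2*pi}. h a \<le> h z"
    using continuous_attains_inf[OF compact_Icc _ hc] by auto
  obtain b where b: "b \<in> {0..2*pi}" "\<forall>z\<in>{0..2*pi}. h z \<le> h b"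
    using continuous_attains_sup[OF compact_Icc _ hc] by auto
  have "h a > 0" unfolding h_def using bmono_lt[of a "a + y"] assms by simp
  moreover have "h a \<le> h u \<and> h u \<le> h b" for u
    using periodic_reduce[where p=h, OF hper, of u] a b by auto
  ultimately show ?thesis unfolding h_def by blast
qed

lemma incr_small:
  assumes "0 < e"
  shows "\<exists>d>0. \<forall>u y. 0 \<le> y \<and> y \<le> d \<longrightarrow> \<beta> (u + y) - \<beta> u \<le> e"
proof -
  have "uniformly_continuous_on {0..2*pi+1} \<beta>"
    by (rule compact_uniformly_continuous[OF continuous_on_subset[OF bcont]]) auto
  then obtain d0 where d0: "d0 > 0" "\<forall>x\<in>{0..2*pi+1}. \<forall>x'\<in>{0..2*pi+1}. dist x' x < d0 \<longrightarrow> dist (\<beta> x') (\<beta> x) < e"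
    unfolding uniformly_continuous_on_def using assms by meson
  define d where "d = min (d0/2) (1/2)"
  have d: "d > 0" "d < d0" "d \<le> 1/2" unfolding d_def using d0 by auto
  have "\<beta> (u + y) - \<beta> u \<le> e" if y: "0 \<le> y" "y \<le> d" for u y
  proof -
    define h where "h u = \<beta> (u + y) - \<beta> u" for u
    have hper: "h (u + 2*pi) = h u" for u unfolding h_def using incr_per[of u y] by (simp add: algebra_simps)
    obtain u' where u': "u' \<in> {0..2*pi}" "h u = h u'" using periodic_reduce[where p=h, OF hper] by blast
    have "dist (\<beta> (u' + y)) (\<beta> u') < e"
      using d0(2) u'(1) y d by (auto simp: dist_real_def)
    then show ?thesis using u'(2) unfolding h_def dist_real_def by simp
  qed
  then show ?thesis using d by blast
qed

end


definition fS :: "real \<Rightarrow> real \<Rightarrow> real \<Rightarrow> real" where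
  "fS \<theta>1 \<theta>2 s = (if cis s \<bullet> cis \<theta>2 > 0 then 1 else 0) - (if cis s \<bullet> cis \<theta>1 > 0 then 1 else 0)"

definition phi0 :: "real \<Rightarrow> real \<Rightarrow> real" where
  "phi0 \<eta> x = (if 0 < sin x \<and> cos \<eta> < cos x then 1 else if sin x < 0 \<and> cos \<eta> < cos x then -1 else 0)"

lemma cis_inner: "cis s \<bullet> cis t = cos (s - t)"
  by (simp add: inner_complex_def cos_diff)

lemma fS_cos: "fS \<theta>1 \<theta>2 s = (if cos (s - \<theta>2) > 0 then 1 else 0) - (if cos (s - \<theta>1) > 0 then 1 else 0)"
  unfolding fS_def cis_inner ..

lemma fS_meas[measurable]: "fS \<theta>1 \<theta>2 \<in> borel_measurable borel"
proof -
  have "fS \<theta>1 \<theta>2 = (\<lambda>s. (if cos (s - \<theta>2) > 0 then 1 else 0) - (if cos (s - \<theta>1) > 0 then 1 else 0))"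
    by (rule ext) (simp add: fS_cos)
  also have "\<dots> \<in> borel_measurable borel" by measurable
  finally show ?thesis .
qed

lemma fS_bnd: "\<bar>fS \<theta>1 \<theta>2 s\<bar> \<le> 1" unfolding fS_def by auto

lemma fS_per: "fS \<theta>1 \<theta>2 (s + 2*pi) = fS \<theta>1 \<theta>2 s"
proof -
  have "cos (s + 2*pi - t) = cos (s - t)" for t
    by (metis add_diff_eq cos_periodic diff_add_eq)
  then show ?thesis unfolding fS_cos by simp
qed

lemma phi0_meas[measurable]: "phi0 \<eta> \<in> borel_measurable borel"
proof -
  have "phi0 \<eta> = (\<lambda>x. if 0 < sin x \<and> cos \<eta> < cos x then 1 else if sin x < 0 \<and> cos \<eta> < cos x then -1 else (0::real))"
    by (rule ext) (simp add: phi0_def)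
  also have "\<dots> \<in> borel_measurable borel" by measurable
  finally show ?thesis .
qed

lemma phi0_bnd: "\<bar>phi0 \<eta> x\<bar> \<le> 1" unfolding phi0_def by auto
lemma phi0_per: "phi0 \<eta> (x + 2*pi) = phi0 \<eta> x" unfolding phi0_def by simp
lemma phi0_odd: "phi0 \<eta> (- x) = - phi0 \<eta> x" unfolding phi0_def by auto

lemma phi0_pos: "0 < x \<Longrightarrow> x < \<eta> \<Longrightarrow> \<eta> \<le> pi \<Longrightarrow> phi0 \<eta> x = 1"
  unfolding phi0_def using sin_gt_zero[of x] cos_monotone_0_pi[of x \<eta>] by auto

lemma phi0_zero: "\<eta> \<le> x \<Longrightarrow> x \<le> pi \<Longrightarrow> 0 \<le> \<eta> \<Longrightarrow> phi0 \<eta> x = 0"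
proof -
  assume a: "\<eta> \<le> x" "x \<le> pi" "0 \<le> \<eta>"
  have "cos x \<le> cos \<eta>"
    using a cos_monotone_0_pi[of \<eta> x] by (cases "\<eta> = x") auto
  then show ?thesis unfolding phi0_def by auto
qed

context core
begin

definition "Gi \<eta> \<theta>1 \<theta>2 p = phi0 \<eta> (snd p - fst p) * sin (\<beta> (snd p - pi/2) - \<beta> (fst p - pi/2)) * fS \<theta>1 \<theta>2 (fst p) * fS \<theta>1 \<theta>2 (snd p)"
definition "H \<theta>1 \<theta>2 s x = sin (\<beta> (s + x - pi/2) - \<beta> (s - pi/2)) * fS \<theta>1 \<theta>2 s * fS \<theta>1 \<theta>2 (s + x)"
definition "J \<theta>1 \<theta>2 x = integral {0..2*pi} (\<lambda>s. H \<theta>1 \<theta>2 s x)"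

lemma bmeas[measurable]: "\<beta> \<in> borel_measurable borel"
  by (rule borel_measurable_continuous_onI[OF bcont])

lemma abs_prod_le1: "\<bar>a\<bar> \<le> 1 \<Longrightarrow> \<bar>b\<bar> \<le> (1::real) \<Longrightarrow> \<bar>a * b\<bar> \<le> 1"
  by (simp add: abs_mult mult_le_one)

lemma meas_pair: "f \<in> borel_measurable (borel \<Otimes>\<^sub>M borel) \<Longrightarrow> (f :: real \<times> real \<Rightarrow> real) \<in> borel_measurable borel"
  by (simp add: borel_prod)

lemma Gi_meas[measurable]: "Gi \<eta> \<theta>1 \<theta>2 \<in> borel_measurable borel"
  unfolding Gi_def[abs_def] by (rule meas_pair) measurable

lemma Gi_bnd: "\<bar>Gi \<eta> \<theta>1 \<theta>2 p\<bar> \<le> 1"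
  unfolding Gi_def by (intro abs_prod_le1 phi0_bnd fS_bnd abs_sin_le_one)

lemma H_meas[measurable]: "(\<lambda>p. H \<theta>1 \<theta>2 (fst p) (snd p)) \<in> borel_measurable borel"
  unfolding H_def by (rule meas_pair) measurable

lemma H_meas1[measurable]: "(\<lambda>s. H \<theta>1 \<theta>2 s x) \<in> borel_measurable borel"
  unfolding H_def by measurable

lemma H_bnd: "\<bar>H \<theta>1 \<theta>2 s x\<bar> \<le> 1"
  unfolding H_def by (intro abs_prod_le1 fS_bnd abs_sin_le_one)

lemma Q_meas[measurable]: "(\<lambda>p. phi0 \<eta> (snd p) * H \<theta>1 \<theta>2 (fst p) (snd p)) \<in> borel_measurable borel"
  unfolding H_def by (rule meas_pair) measurable

lemma Q_bnd: "\<bar>phi0 \<eta> x * H \<theta>1 \<theta>2 s x\<bar> \<le> 1"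
  by (intro abs_prod_le1 phi0_bnd H_bnd)

lemma sin_beta_per1: "sin (\<beta> (t + 2*pi) - y) = sin (\<beta> t - y)"
proof -
  have h: "\<beta> (t + 2*pi) - y = (\<beta> t - y) + 2*pi * of_int kK" using bper by simp
  show ?thesis by (simp only: h sin_add_2pi_int)
qed

lemma sin_beta_per2: "sin (y - \<beta> (t + 2*pi)) = sin (y - \<beta> t)"
proof -
  have h: "y - \<beta> (t + 2*pi) = (y - \<beta> t) + 2*pi * of_int (- kK)" using bper by simp
  show ?thesis by (simp only: h sin_add_2pi_int)
qed

lemma Gi_per_t: "Gi \<eta> \<theta>1 \<theta>2 (s, t + 2*pi) = Gi \<eta> \<theta>1 \<theta>2 (s, t)"
proof -
  have "phi0 \<eta> (t + 2*pi - s) = phi0 \<eta> (t - s)" using phi0_per[of \<eta> "t - s"] by (simp add: algebra_simps)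
  moreover have "sin (\<beta> (t + 2*pi - pi/2) - y) = sin (\<beta> (t - pi/2) - y)" for y
    using sin_beta_per1[of "t - pi/2" y] by (simp add: algebra_simps)
  ultimately show ?thesis unfolding Gi_def by (simp add: fS_per)
qed

lemma H_per_s: "H \<theta>1 \<theta>2 (s + 2*pi) x = H \<theta>1 \<theta>2 s x"
proof -
  have "\<beta> (s + 2*pi + x - pi/2) = \<beta> (s + x - pi/2) + 2*pi * of_int kK"
    using bper[of "s + x - pi/2"] by (simp add: algebra_simps)
  moreover have "\<beta> (s + 2*pi - pi/2) = \<beta> (s - pi/2) + 2*pi * of_int kK"
    using bper[of "s - pi/2"] by (simp add: algebra_simps)
  moreover have "fS \<theta>1 \<theta>2 (s + 2*pi + x) = fS \<theta>1 \<theta>2 (s + x)"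
    using fS_per[of \<theta>1 \<theta>2 "s + x"] by (simp add: algebra_simps)
  ultimately show ?thesis unfolding H_def by (simp add: fS_per)
qed

lemma inner_reduce:
  "integral {0..2*pi} (\<lambda>t. Gi \<eta> \<theta>1 \<theta>2 (s, t)) = integral {-pi..pi} (\<lambda>x. phi0 \<eta> x * H \<theta>1 \<theta>2 s x)"
proof -
  have int: "(\<lambda>t. Gi \<eta> \<theta>1 \<theta>2 (s, t)) integrable_on {a..b}" for a b
    by (rule bdd_integrable[where B=1]) (auto intro: Gi_bnd)
  have "integral {0..2*pi} (\<lambda>t. Gi \<eta> \<theta>1 \<theta>2 (s, t)) = integral {(s - pi)..(s - pi) + 2*pi} (\<lambda>t. Gi \<eta> \<theta>1 \<theta>2 (s, t))"
    by (rule integral_periodic_shift[symmetric]) (auto intro: Gi_per_t int)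
  also have "\<dots> = integral {(s - pi) - s..(s - pi) + 2*pi - s} (\<lambda>x. Gi \<eta> \<theta>1 \<theta>2 (s, x + s))"
    by (rule integral_shift_real_ivl[symmetric])
  also have "\<dots> = integral {-pi..pi} (\<lambda>x. phi0 \<eta> x * H \<theta>1 \<theta>2 s x)"
    unfolding Gi_def H_def by (simp add: algebra_simps)
  finally show ?thesis .
qed

lemma DeltaB_reduce:
  "integral ({0..2*pi} \<times> {0..2*pi}) (Gi \<eta> \<theta>1 \<theta>2) = integral {-pi..pi} (\<lambda>x. phi0 \<eta> x * J \<theta>1 \<theta>2 x)"
proof -
  have "integral ({0..2*pi} \<times> {0..2*pi}) (Gi \<eta> \<theta>1 \<theta>2) = integral {0..2*pi} (\<lambda>s. integral {0..2*pi} (\<lambda>t. Gi \<eta> \<theta>1 \<theta>2 (s, t)))"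
    by (rule fubini_box(1)[where B=1]) (auto intro: Gi_bnd)
  also have "\<dots> = integral {0..2*pi} (\<lambda>s. integral {-pi..pi} (\<lambda>x. phi0 \<eta> x * H \<theta>1 \<theta>2 s x))"
    by (simp add: inner_reduce)
  also have "\<dots> = integral {-pi..pi} (\<lambda>x. integral {0..2*pi} (\<lambda>s. phi0 \<eta> x * H \<theta>1 \<theta>2 s x))"
  proof -
    note e = fubini_box[where B=1 and g="\<lambda>p. phi0 \<eta> (snd p) * H \<theta>1 \<theta>2 (fst p) (snd p)" and a=0 and b="2*pi" and c="-pi" and d=pi, OF Q_meas Q_bnd]
    show ?thesis using e(1) e(2) by simp
  qed
  also have "\<dots> = integral {-pi..pi} (\<lambda>x. phi0 \<eta> x * J \<theta>1 \<theta>2 x)"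
    unfolding J_def by simp
  finally show ?thesis .
qed

lemma J_integrable: "c \<le> d \<Longrightarrow> J \<theta>1 \<theta>2 integrable_on {c..d}"
  unfolding J_def[abs_def]
  by (rule fubini_box(4)[where B=1 and g="\<lambda>p. H \<theta>1 \<theta>2 (fst p) (snd p)", simplified]) (auto intro: H_bnd)

lemma J_odd: "J \<theta>1 \<theta>2 (- x) = - J \<theta>1 \<theta>2 x"
proof -
  have int: "(\<lambda>s. H \<theta>1 \<theta>2 s x) integrable_on {a..b}" for a b
    by (rule bdd_integrable[where B=1]) (auto intro: H_bnd)
  have "J \<theta>1 \<theta>2 (- x) = integral {0..2*pi} (\<lambda>s. H \<theta>1 \<theta>2 s (- x))" unfolding J_def ..
  also have "\<dots> = integral {0 - x..2*pi - x} (\<lambda>s. H \<theta>1 \<theta>2 (s + x) (- x))"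
    by (rule integral_shift_real_ivl[symmetric])
  also have "\<dots> = integral {(-x)..(-x) + 2*pi} (\<lambda>s. - H \<theta>1 \<theta>2 s x)"
  proof -
    have "H \<theta>1 \<theta>2 (s + x) (- x) = - H \<theta>1 \<theta>2 s x" for s
    proof -
      have "sin (\<beta> (s + x + - x - pi/2) - \<beta> (s + x - pi/2)) = - sin (\<beta> (s + x - pi/2) - \<beta> (s - pi/2))"
        by (simp add: sin_minus[symmetric])
      then show ?thesis unfolding H_def by (simp add: algebra_simps)
    qed
    then show ?thesis by (simp add: algebra_simps)
  qed
  also have "\<dots> = integral {0..2*pi} (\<lambda>s. - H \<theta>1 \<theta>2 s x)"
    by (rule integral_periodic_shift) (auto simp: H_per_s intro: integrable_neg int)
  also have "\<dots> = - J \<theta>1 \<theta>2 x" unfolding J_def by (simp add: integral_neg int)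
  finally show ?thesis .
qed

end

lemma comb_i:
  fixes u x t1 t2 :: real
  assumes r: "t1 - pi \<le> u" "u \<le> t1 + pi" "t1 < t2" "t2 \<le> t1 + pi" "0 < x" "x < pi/2"
    and i: "t1 < u" "u < t2 - x"
  shows "((0 < t2 - u \<and> t2 - u < pi) \<or> t2 - u < -pi) \<and> \<not> ((0 < t1 - u \<and> t1 - u < pi) \<or> t1 - u < -pi)
    \<and> ((0 < t2 - (u + x) \<and> t2 - (u + x) < pi) \<or> t2 - (u + x) < -pi) \<and> \<not> ((0 < t1 - (u + x) \<and> t1 - (u + x) < pi) \<or> t1 - (u + x) < -pi)"
  using r i by auto

lemma comb_ii:
  fixes u x t1 t2 :: real
  assumes r: "t1 - pi \<le> u" "u \<le> t1 + pi" "t1 < t2" "t2 \<le> t1 + pi" "0 < x" "x < pi/2"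
    and i: "(((0 < t2 - u \<and> t2 - u < pi) \<or> t2 - u < -pi) \<and> \<not> ((0 < t1 - u \<and> t1 - u < pi) \<or> t1 - u < -pi)
    \<and> \<not>((0 < t2 - (u + x) \<and> t2 - (u + x) < pi) \<or> t2 - (u + x) < -pi) \<and> ((0 < t1 - (u + x) \<and> t1 - (u + x) < pi) \<or> t1 - (u + x) < -pi))
   \<or> (\<not>((0 < t2 - u \<and> t2 - u < pi) \<or> t2 - u < -pi) \<and> ((0 < t1 - u \<and> t1 - u < pi) \<or> t1 - u < -pi)
    \<and> ((0 < t2 - (u + x) \<and> t2 - (u + x) < pi) \<or> t2 - (u + x) < -pi) \<and> \<not> ((0 < t1 - (u + x) \<and> t1 - (u + x) < pi) \<or> t1 - (u + x) < -pi))"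
  shows "pi - (t2 - t1) \<le> x \<and> ((t2 - pi - x \<le> u \<and> u \<le> t2 - pi) \<or> (t2 - x \<le> u \<and> u \<le> t2))"
  using r i by auto

definition Fv :: "real \<Rightarrow> real \<Rightarrow> real \<Rightarrow> real" where
  "Fv \<theta>1 \<theta>2 v = (if sin (\<theta>2 - v) > 0 then 1 else 0) - (if sin (\<theta>1 - v) > 0 then 1 else 0)"

lemma fS_shift: "fS \<theta>1 \<theta>2 (v + pi/2) = Fv \<theta>1 \<theta>2 v"
proof -
  have "cos (v + pi/2 - t) = sin (t - v)" for t
    by (simp add: cos_sin_eq algebra_simps)
  then show ?thesis unfolding fS_cos Fv_def by simp
qed

lemma Fv_meas[measurable]: "Fv \<theta>1 \<theta>2 \<in> borel_measurable borel"
  unfolding Fv_def[abs_def] by measurable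

lemma Fv_char:
  assumes "-2*pi < \<theta>1 - v" "\<theta>1 - v \<le> 2*pi" "-2*pi < \<theta>2 - v" "\<theta>2 - v \<le> 2*pi"
  shows "Fv \<theta>1 \<theta>2 v = (if (0 < \<theta>2 - v \<and> \<theta>2 - v < pi) \<or> \<theta>2 - v < -pi then 1 else 0)
     - (if (0 < \<theta>1 - v \<and> \<theta>1 - v < pi) \<or> \<theta>1 - v < -pi then 1 else 0)"
  unfolding Fv_def using sinpos[OF assms(1,2)] sinpos[OF assms(3,4)] by simp

context core
begin

lemma H_shift: "H \<theta>1 \<theta>2 (u + pi/2) x = sin (\<beta> (u + x) - \<beta> u) * Fv \<theta>1 \<theta>2 u * Fv \<theta>1 \<theta>2 (u + x)"
proof -
  have "fS \<theta>1 \<theta>2 (u + pi/2 + x) = Fv \<theta>1 \<theta>2 (u + x)"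
    using fS_shift[of \<theta>1 \<theta>2 "u + x"] by (simp add: algebra_simps)
  then show ?thesis unfolding H_def by (simp add: fS_shift algebra_simps)
qed

lemma pw:
  fixes u x \<theta>1 \<theta>2 S Mb :: real
  assumes r: "\<theta>1 - pi \<le> u" "u \<le> \<theta>1 + pi" "\<theta>1 < \<theta>2" "\<theta>2 \<le> \<theta>1 + pi" "0 < x" "x < pi/2"
    and S: "0 \<le> S" "S \<le> Mb"
  shows "S * Fv \<theta>1 \<theta>2 u * Fv \<theta>1 \<theta>2 (u + x) \<ge>
     S * (if \<theta>1 < u \<and> u < \<theta>2 - x then 1 else 0)
     - (if pi - (\<theta>2 - \<theta>1) \<le> x then Mb * ((if \<theta>2 - pi - x \<le> u \<and> u \<le> \<theta>2 - pi then 1 else 0)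
            + (if \<theta>2 - x \<le> u \<and> u \<le> \<theta>2 then 1 else 0)) else 0)"
proof -
  have f0: "Fv \<theta>1 \<theta>2 u = (if (0 < \<theta>2 - u \<and> \<theta>2 - u < pi) \<or> \<theta>2 - u < -pi then 1 else 0)
     - (if (0 < \<theta>1 - u \<and> \<theta>1 - u < pi) \<or> \<theta>1 - u < -pi then 1 else 0)"
    by (rule Fv_char) (use r in auto)
  have f1: "Fv \<theta>1 \<theta>2 (u + x) = (if (0 < \<theta>2 - (u + x) \<and> \<theta>2 - (u + x) < pi) \<or> \<theta>2 - (u + x) < -pi then 1 else 0)
     - (if (0 < \<theta>1 - (u + x) \<and> \<theta>1 - (u + x) < pi) \<or> \<theta>1 - (u + x) < -pi then 1 else 0)"
    by (rule Fv_char) (use r pi_gt3 in auto)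
  note ci = comb_i[OF r]
  note cii = comb_ii[OF r]
  have Mb0: "0 \<le> Mb" using S by linarith
  show ?thesis
    unfolding f0 f1 using ci cii S Mb0
    apply (simp only: split: if_split)
    apply (intro conjI impI)
    by (simp_all; linarith?)+
qed

end

context core
begin

lemma psi_integrable: "(\<lambda>x. phi0 \<eta> x * J \<theta>1 \<theta>2 x) integrable_on {c..d}" if "c \<le> d" for c d
proof -
  note e = fubini_box(4)[where B=1 and g="\<lambda>p. phi0 \<eta> (snd p) * H \<theta>1 \<theta>2 (fst p) (snd p)" and a=0 and b="2*pi" and c=c and d=d, OF Q_meas Q_bnd]
  show ?thesis using e that unfolding J_def by simp
qed

lemma R6:
  assumes "0 < \<eta>" "\<eta> \<le> pi"
  shows "integral {-pi..pi} (\<lambda>x. phi0 \<eta> x * J \<theta>1 \<theta>2 x) = 2 * integral {0..\<eta>} (J \<theta>1 \<theta>2)"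
proof -
  let ?p = "\<lambda>x. phi0 \<eta> x * J \<theta>1 \<theta>2 x"
  have even: "?p (- x) = ?p x" for x by (simp add: phi0_odd J_odd)
  have i: "?p integrable_on {-pi..pi}" by (rule psi_integrable) simp
  have "integral {-pi..pi} ?p = integral {-pi..0} ?p + integral {0..pi} ?p"
    using Henstock_Kurzweil_Integration.integral_combine[where a="-pi" and c=0 and b=pi and f="?p"] i by simp
  moreover have "integral {-pi..0} ?p = integral {0..pi} ?p"
  proof -
    have "integral {- pi..- 0} (\<lambda>x. ?p (- x)) = integral {0..pi} ?p"
      using Henstock_Kurzweil_Integration.integral_reflect_real[where a=0 and b=pi and f="?p"] by simp
    then show ?thesis using even by simp
  qed
  moreover have "integral {0..pi} ?p = integral {0..\<eta>} ?p + integral {\<eta>..pi} ?p"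
    using Henstock_Kurzweil_Integration.integral_combine[where a=0 and c=\<eta> and b=pi and f="?p"] assms
      psi_integrable[of 0 pi] by simp
  moreover have "integral {\<eta>..pi} ?p = 0"
  proof -
    have "integral {\<eta>..pi} ?p = integral {\<eta>..pi} (\<lambda>x. 0)"
      by (rule integral_cong) (use assms phi0_zero in auto)
    then show ?thesis by simp
  qed
  moreover have "integral {0..\<eta>} ?p = integral {0..\<eta>} (J \<theta>1 \<theta>2)"
  proof (rule integral_spike[where S="{0, \<eta>}"])
    show "negligible {0, \<eta>}" by (rule negligible_finite) simp
    fix x assume "x \<in> {0..\<eta>} - {0, \<eta>}"
    then show "J \<theta>1 \<theta>2 x = ?p x" using phi0_pos[of x \<eta>] assms by auto
  qed
  ultimately show ?thesis by simp
qed

lemma J_shift: "J \<theta>1 \<theta>2 x = integral {\<theta>1 - pi..\<theta>1 + pi} (\<lambda>u. sin (\<beta> (u + x) - \<beta> u) * Fv \<theta>1 \<theta>2 u * Fv \<theta>1 \<theta>2 (u + x))"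
proof -
  have int: "(\<lambda>s. H \<theta>1 \<theta>2 s x) integrable_on {a..b}" for a b
    by (rule bdd_integrable[where B=1]) (auto intro: H_bnd)
  have "J \<theta>1 \<theta>2 x = integral {(\<theta>1 - pi/2)..(\<theta>1 - pi/2) + 2*pi} (\<lambda>s. H \<theta>1 \<theta>2 s x)"
    unfolding J_def by (rule integral_periodic_shift[symmetric]) (auto intro: H_per_s int)
  also have "\<dots> = integral {(\<theta>1 - pi/2) - pi/2..(\<theta>1 - pi/2) + 2*pi - pi/2} (\<lambda>u. H \<theta>1 \<theta>2 (u + pi/2) x)"
    by (rule integral_shift_real_ivl[symmetric])
  also have "\<dots> = integral {\<theta>1 - pi..\<theta>1 + pi} (\<lambda>u. sin (\<beta> (u + x) - \<beta> u) * Fv \<theta>1 \<theta>2 u * Fv \<theta>1 \<theta>2 (u + x))"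
  proof -
    have "(\<theta>1 - pi/2) - pi/2 = \<theta>1 - pi" "(\<theta>1 - pi/2) + 2*pi - pi/2 = \<theta>1 + pi" by simp_all
    then show ?thesis by (simp only: H_shift)
  qed
  finally show ?thesis .
qed

lemma int_ind:
  fixes A B p q c :: real
  assumes "A \<le> p" "p \<le> q" "q \<le> B"
  shows "integral {A..B} (\<lambda>u. if p \<le> u \<and> u \<le> q then c else 0) = c * (q - p)"
proof -
  have "integral {A..B} (\<lambda>u. if p \<le> u \<and> u \<le> q then c else 0) = integral {A..B} (\<lambda>u. if u \<in> {p..q} then c else 0)"
    by simp
  also have "\<dots> = integral ({p..q} \<inter> {A..B}) (\<lambda>u. c)" by (rule integral_restrict_Int)
  also have "{p..q} \<inter> {A..B} = {p..q}" using assms by auto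
  finally show ?thesis using assms by simp
qed

lemma J_lower:
  assumes t: "\<theta>1 < \<theta>2" "\<theta>2 \<le> \<theta>1 + pi" and x: "0 < x" "x < pi/2"
    and Mb: "\<And>u. 0 \<le> \<beta> (u + x) - \<beta> u \<and> \<beta> (u + x) - \<beta> u \<le> Mb" and Mb1: "Mb \<le> 1"
  shows "J \<theta>1 \<theta>2 x \<ge> integral {\<theta>1..\<theta>2 - x} (\<lambda>u. sin (\<beta> (u + x) - \<beta> u))
      - (if pi - (\<theta>2 - \<theta>1) \<le> x then 2 * x * Mb else 0)"
proof -
  define S where "S u = sin (\<beta> (u + x) - \<beta> u)" for u
  have S0: "0 \<le> S u" "S u \<le> Mb" for u
  proof -
    have a: "0 \<le> \<beta> (u + x) - \<beta> u" "\<beta> (u + x) - \<beta> u \<le> 1" using Mb[of u] Mb1 by auto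
    show "0 \<le> S u" unfolding S_def using a pi_gt3 by (intro sin_ge_zero) auto
    show "S u \<le> Mb" unfolding S_def using sin_x_le_x[OF a(1)] Mb[of u] by linarith
  qed
  have Sm[measurable]: "S \<in> borel_measurable borel" unfolding S_def[abs_def] by measurable
  have Sb: "\<bar>S u\<bar> \<le> 1" for u unfolding S_def by (rule abs_sin_le_one)
  define R1 where "R1 u = S u * (if \<theta>1 < u \<and> u < \<theta>2 - x then 1 else 0)" for u
  define R2 where "R2 u = (if pi - (\<theta>2 - \<theta>1) \<le> x then Mb * ((if \<theta>2 - pi - x \<le> u \<and> u \<le> \<theta>2 - pi then 1 else 0)
            + (if \<theta>2 - x \<le> u \<and> u \<le> \<theta>2 then 1 else 0)) else 0)" for u
  let ?A = "\<theta>1 - pi" and ?B = "\<theta>1 + pi"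
  have R1m[measurable]: "R1 \<in> borel_measurable borel" unfolding R1_def[abs_def] by measurable
  have R2m[measurable]: "R2 \<in> borel_measurable borel" unfolding R2_def[abs_def] by measurable
  have R1b: "\<bar>R1 u\<bar> \<le> 1" for u unfolding R1_def using Sb[of u] by auto
  have R2b: "\<bar>R2 u\<bar> \<le> 2 * \<bar>Mb\<bar>" for u unfolding R2_def by (auto simp: abs_mult)
  have iR1: "R1 integrable_on {?A..?B}" by (rule bdd_integrable[OF R1m R1b])
  have iR2: "R2 integrable_on {?A..?B}" by (rule bdd_integrable[OF R2m R2b])
  have L: "(\<lambda>u. S u * Fv \<theta>1 \<theta>2 u * Fv \<theta>1 \<theta>2 (u + x)) integrable_on {?A..?B}"
  proof (rule bdd_integrable[where B=1])
    show "(\<lambda>u. S u * Fv \<theta>1 \<theta>2 u * Fv \<theta>1 \<theta>2 (u + x)) \<in> borel_measurable borel" by measurable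
    fix u
    have "\<bar>Fv \<theta>1 \<theta>2 v\<bar> \<le> 1" for v unfolding Fv_def by auto
    then show "\<bar>S u * Fv \<theta>1 \<theta>2 u * Fv \<theta>1 \<theta>2 (u + x)\<bar> \<le> 1"
      using Sb[of u] by (intro abs_prod_le1) auto
  qed
  have "integral {?A..?B} (\<lambda>u. R1 u - R2 u) \<le> integral {?A..?B} (\<lambda>u. S u * Fv \<theta>1 \<theta>2 u * Fv \<theta>1 \<theta>2 (u + x))"
  proof (rule integral_le[OF integrable_diff[OF iR1 iR2] L])
    fix u assume "u \<in> {?A..?B}"
    then show "R1 u - R2 u \<le> S u * Fv \<theta>1 \<theta>2 u * Fv \<theta>1 \<theta>2 (u + x)"
      unfolding R1_def R2_def using pw[of \<theta>1 u \<theta>2 x "S u" Mb] t x S0[of u] pi_gt3 by auto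
  qed
  moreover have "J \<theta>1 \<theta>2 x = integral {?A..?B} (\<lambda>u. S u * Fv \<theta>1 \<theta>2 u * Fv \<theta>1 \<theta>2 (u + x))"
    unfolding S_def by (rule J_shift)
  moreover have "integral {?A..?B} (\<lambda>u. R1 u - R2 u) = integral {?A..?B} R1 - integral {?A..?B} R2"
    by (rule integral_diff[OF iR1 iR2])
  moreover have "integral {?A..?B} R1 = integral {\<theta>1..\<theta>2 - x} S"
  proof -
    have "integral {?A..?B} R1 = integral {?A..?B} (\<lambda>u. if u \<in> {\<theta>1..\<theta>2 - x} then S u else 0)"
    proof (rule integral_spike[where S="{\<theta>1, \<theta>2 - x}"])
      show "negligible {\<theta>1, \<theta>2 - x}" by (rule negligible_finite) simp
    qed (auto simp: R1_def)
    also have "\<dots> = integral ({\<theta>1..\<theta>2 - x} \<inter> {?A..?B}) S" by (rule integral_restrict_Int)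
    also have "{\<theta>1..\<theta>2 - x} \<inter> {?A..?B} = {\<theta>1..\<theta>2 - x}" using t x pi_gt3 by auto
    finally show ?thesis .
  qed
  moreover have "integral {?A..?B} R2 = (if pi - (\<theta>2 - \<theta>1) \<le> x then 2 * x * Mb else 0)"
  proof (cases "pi - (\<theta>2 - \<theta>1) \<le> x")
    case True
    have i2: "(\<lambda>u. if \<theta>2 - pi - x \<le> u \<and> u \<le> \<theta>2 - pi then Mb else 0) integrable_on {?A..?B}"
      by (rule bdd_integrable[where B="\<bar>Mb\<bar>"]) auto
    have i3: "(\<lambda>u. if \<theta>2 - x \<le> u \<and> u \<le> \<theta>2 then Mb else 0) integrable_on {?A..?B}"
      by (rule bdd_integrable[where B="\<bar>Mb\<bar>"]) auto
    have "integral {?A..?B} R2 = integral {?A..?B} (\<lambda>u. (if \<theta>2 - pi - x \<le> u \<and> u \<le> \<theta>2 - pi then Mb else 0)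
        + (if \<theta>2 - x \<le> u \<and> u \<le> \<theta>2 then Mb else 0))"
      unfolding R2_def using True by (intro integral_cong) auto
    also have "\<dots> = integral {?A..?B} (\<lambda>u. if \<theta>2 - pi - x \<le> u \<and> u \<le> \<theta>2 - pi then Mb else 0)
        + integral {?A..?B} (\<lambda>u. if \<theta>2 - x \<le> u \<and> u \<le> \<theta>2 then Mb else 0)"
      by (rule integral_add[OF i2 i3])
    also have "\<dots> = Mb * x + Mb * x"
      using int_ind[of ?A "\<theta>2 - pi - x" "\<theta>2 - pi" ?B Mb] int_ind[of ?A "\<theta>2 - x" \<theta>2 ?B Mb] t x True
      by simp
    finally show ?thesis using True by simp
  next
    case False
    then show ?thesis unfolding R2_def by simp
  qed
  ultimately show ?thesis unfolding S_def by simp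
qed

end

lemma antideriv:
  fixes f :: "real \<Rightarrow> real"
  assumes c: "\<And>x. L \<le> x \<Longrightarrow> isCont f x"
  shows "\<exists>F. \<forall>x>L. (F has_real_derivative f x) (at x)"
proof -
  define F where "F x = integral {L..x} f" for x
  have "(F has_real_derivative f x) (at x)" if "x > L" for x
  proof -
    have co: "continuous_on {L..x+1} f" using c by (intro continuous_at_imp_continuous_on) auto
    have "(F has_real_derivative f x) (at x within {L..x+1})"
      unfolding F_def by (rule integral_has_real_derivative[OF co]) (use that in auto)
    moreover have "at x within {L..x+1} = at x" by (rule at_within_Icc_at) (use that in auto)
    ultimately show ?thesis by simp
  qed
  then show ?thesis by blast
qed

lemma ftc_real:
  fixes F f :: "real \<Rightarrow> real"
  assumes "a \<le> b" "\<And>x. x \<in> {a..b} \<Longrightarrow> (F has_real_derivative f x) (at x)"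
  shows "integral {a..b} f = F b - F a" "f integrable_on {a..b}"
proof -
  have "(f has_integral F b - F a) {a..b}"
  proof (rule fundamental_theorem_of_calculus[OF assms(1)])
    fix x assume "x \<in> {a..b}"
    then show "(F has_vector_derivative f x) (at x within {a..b})"
      using assms(2) has_real_derivative_iff_has_vector_derivative has_vector_derivative_at_within by blast
  qed
  then show "integral {a..b} f = F b - F a" "f integrable_on {a..b}" by (auto simp: integral_unique integrable_on_def)
qed

context core
begin

lemma Lam_formula:
  assumes t: "\<theta>1 < \<theta>2"
    and A: "\<And>x. x \<ge> \<theta>1 \<Longrightarrow> (A has_real_derivative \<beta> x) (at x)"
    and C: "\<And>x. x \<ge> \<theta>1 \<Longrightarrow> (C has_real_derivative A x) (at x)"
  shows "integral ({\<theta>1..\<theta>2} \<times> {\<theta>1..\<theta>2}) (\<lambda>(s, t). \<bar>\<beta> t - \<beta> s\<bar>)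
     = 2 * (\<theta>2 - \<theta>1) * (A \<theta>1 + A \<theta>2) - 4 * (C \<theta>2 - C \<theta>1)"
proof -
  let ?g = "\<lambda>(s, t). \<bar>\<beta> t - \<beta> s\<bar>"
  have S: "{\<theta>1..\<theta>2} \<times> {\<theta>1..\<theta>2} = cbox (\<theta>1, \<theta>1) (\<theta>2, \<theta>2)" by (simp add: cbox_Pair_eq)
  have cg: "continuous_on (cbox (\<theta>1, \<theta>1) (\<theta>2, \<theta>2)) ?g"
    unfolding case_prod_unfold
    by (intro continuous_intros continuous_on_compose2[OF bcont]) auto
  have e1: "integral ({\<theta>1..\<theta>2} \<times> {\<theta>1..\<theta>2}) ?g = integral {\<theta>1..\<theta>2} (\<lambda>s. integral {\<theta>1..\<theta>2} (\<lambda>t. \<bar>\<beta> t - \<beta> s\<bar>))"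
    unfolding S using integral_prod_continuous[OF cg] by simp
  define inner where "inner s = (2 * s - \<theta>1 - \<theta>2) * \<beta> s - 2 * A s + A \<theta>1 + A \<theta>2" for s
  have e2: "integral {\<theta>1..\<theta>2} (\<lambda>t. \<bar>\<beta> t - \<beta> s\<bar>) = inner s" if s: "s \<in> {\<theta>1..\<theta>2}" for s
  proof -
    have ct: "continuous_on {\<theta>1..\<theta>2} (\<lambda>t. \<bar>\<beta> t - \<beta> s\<bar>)"
      by (intro continuous_intros continuous_on_compose2[OF bcont]) auto
    have "integral {\<theta>1..\<theta>2} (\<lambda>t. \<bar>\<beta> t - \<beta> s\<bar>) = integral {\<theta>1..s} (\<lambda>t. \<bar>\<beta> t - \<beta> s\<bar>) + integral {s..\<theta>2} (\<lambda>t. \<bar>\<beta> t - \<beta> s\<bar>)"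
      using Henstock_Kurzweil_Integration.integral_combine[where a=\<theta>1 and c=s and b=\<theta>2 and f="\<lambda>t. \<bar>\<beta> t - \<beta> s\<bar>"]
        s integrable_continuous_real[OF ct] by simp
    moreover have "integral {\<theta>1..s} (\<lambda>t. \<bar>\<beta> t - \<beta> s\<bar>) = (s * \<beta> s - A s) - (\<theta>1 * \<beta> s - A \<theta>1)"
    proof -
      have "integral {\<theta>1..s} (\<lambda>t. \<bar>\<beta> t - \<beta> s\<bar>) = integral {\<theta>1..s} (\<lambda>t. \<beta> s - \<beta> t)"
        by (rule integral_cong) (use bmono_le in auto)
      also have "\<dots> = (s * \<beta> s - A s) - (\<theta>1 * \<beta> s - A \<theta>1)"
        by (rule ftc_real(1)) (use s in \<open>auto intro!: derivative_eq_intros A\<close>)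
      finally show ?thesis .
    qed
    moreover have "integral {s..\<theta>2} (\<lambda>t. \<bar>\<beta> t - \<beta> s\<bar>) = (A \<theta>2 - \<theta>2 * \<beta> s) - (A s - s * \<beta> s)"
    proof -
      have "integral {s..\<theta>2} (\<lambda>t. \<bar>\<beta> t - \<beta> s\<bar>) = integral {s..\<theta>2} (\<lambda>t. \<beta> t - \<beta> s)"
        by (rule integral_cong) (use bmono_le in auto)
      also have "\<dots> = (A \<theta>2 - \<theta>2 * \<beta> s) - (A s - s * \<beta> s)"
        by (rule ftc_real(1)) (use s in \<open>auto intro!: derivative_eq_intros A\<close>)
      finally show ?thesis .
    qed
    ultimately show ?thesis unfolding inner_def by (simp add: algebra_simps)
  qed
  have "integral {\<theta>1..\<theta>2} (\<lambda>s. integral {\<theta>1..\<theta>2} (\<lambda>t. \<bar>\<beta> t - \<beta> s\<bar>)) = integral {\<theta>1..\<theta>2} inner"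
    by (rule integral_cong) (rule e2)
  also have "\<dots> = ((2*\<theta>2 - \<theta>1 - \<theta>2) * A \<theta>2 - 4 * C \<theta>2 + (A \<theta>1 + A \<theta>2) * \<theta>2)
      - ((2*\<theta>1 - \<theta>1 - \<theta>2) * A \<theta>1 - 4 * C \<theta>1 + (A \<theta>1 + A \<theta>2) * \<theta>1)"
  proof (rule ftc_real(1))
    show "\<theta>1 \<le> \<theta>2" using t by simp
    fix s assume s: "s \<in> {\<theta>1..\<theta>2}"
    have "((\<lambda>s. (2 * s - \<theta>1 - \<theta>2) * A s - 4 * C s + (A \<theta>1 + A \<theta>2) * s) has_real_derivative
       (2 * A s + (2 * s - \<theta>1 - \<theta>2) * \<beta> s - 4 * A s + (A \<theta>1 + A \<theta>2))) (at s)"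
      using s by (auto intro!: derivative_eq_intros A C)
    moreover have "2 * A s + (2 * s - \<theta>1 - \<theta>2) * \<beta> s - 4 * A s + (A \<theta>1 + A \<theta>2) = inner s"
      unfolding inner_def by (simp add: algebra_simps)
    ultimately show "((\<lambda>s. (2 * s - \<theta>1 - \<theta>2) * A s - 4 * C s + (A \<theta>1 + A \<theta>2) * s) has_real_derivative inner s) (at s)"
      by simp
  qed
  finally show ?thesis using e1 by (simp add: algebra_simps)
qed

end

lemma deriv_shift_add:
  assumes "(F has_real_derivative D) (at (y + x))"
  shows "((\<lambda>z. F (z + x)) has_real_derivative D) (at y)"
proof -
  have "((\<lambda>z. z + x) has_real_derivative 1) (at y)" by (auto intro!: derivative_eq_intros)
  from DERIV_chain2[OF assms this] show ?thesis by simp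
qed

lemma deriv_shift_sub:
  assumes "(F has_real_derivative D) (at (x - y))"
  shows "((\<lambda>z. F (x - z)) has_real_derivative - D) (at y)"
proof -
  have "((\<lambda>z. x - z) has_real_derivative -1) (at y)" by (auto intro!: derivative_eq_intros)
  from DERIV_chain2[OF assms this] show ?thesis by simp
qed

context core
begin

lemma J0: "J \<theta>1 \<theta>2 0 = 0"
  unfolding J_def H_def by simp

lemma S_props:
  assumes "0 \<le> \<beta> (u + x) - \<beta> u" "\<beta> (u + x) - \<beta> u \<le> 1"
  shows "0 \<le> sin (\<beta> (u + x) - \<beta> u)" "(\<beta> (u + x) - \<beta> u) / 2 \<le> sin (\<beta> (u + x) - \<beta> u)"
proof -
  show "0 \<le> sin (\<beta> (u + x) - \<beta> u)" using assms pi_gt3 by (intro sin_ge_zero) auto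
  show "(\<beta> (u + x) - \<beta> u) / 2 \<le> sin (\<beta> (u + x) - \<beta> u)" by (rule sin_ge_half[OF assms])
qed

lemma S_int: "(\<lambda>u. sin (\<beta> (u + x) - \<beta> u)) integrable_on {a..b}"
  by (rule integrable_continuous_real) (intro continuous_intros continuous_on_compose2[OF bcont], auto)

lemma P_nonneg:
  assumes "\<And>u. 0 \<le> \<beta> (u + x) - \<beta> u \<and> \<beta> (u + x) - \<beta> u \<le> 1"
  shows "0 \<le> integral {a..b} (\<lambda>u. sin (\<beta> (u + x) - \<beta> u))"
  by (rule integral_nonneg[OF S_int]) (use S_props assms in auto)

lemma P_half:
  assumes x: "0 \<le> x" "\<theta>1 \<le> \<theta>2 - x"
    and B: "\<And>u. 0 \<le> \<beta> (u + x) - \<beta> u \<and> \<beta> (u + x) - \<beta> u \<le> 1"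
    and A: "\<And>y. y \<ge> \<theta>1 \<Longrightarrow> (A has_real_derivative \<beta> y) (at y)"
  shows "integral {\<theta>1..\<theta>2 - x} (\<lambda>u. sin (\<beta> (u + x) - \<beta> u)) \<ge> (A \<theta>2 - A (\<theta>2 - x) - A (\<theta>1 + x) + A \<theta>1) / 2"
proof -
  have ft: "integral {\<theta>1..\<theta>2 - x} (\<lambda>u. \<beta> (u + x) - \<beta> u) = (A ((\<theta>2 - x) + x) - A (\<theta>2 - x)) - (A (\<theta>1 + x) - A \<theta>1)"
       "(\<lambda>u. \<beta> (u + x) - \<beta> u) integrable_on {\<theta>1..\<theta>2 - x}"
  proof -
    have d: "((\<lambda>u. A (u + x) - A u) has_real_derivative \<beta> (u + x) - \<beta> u) (at u)" if "u \<in> {\<theta>1..\<theta>2 - x}" for u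
    proof -
      have "((\<lambda>z. A (z + x)) has_real_derivative \<beta> (u + x)) (at u)"
        by (rule deriv_shift_add, rule A) (use that x in auto)
      then show ?thesis using that by (auto intro!: derivative_eq_intros A)
    qed
    show "integral {\<theta>1..\<theta>2 - x} (\<lambda>u. \<beta> (u + x) - \<beta> u) = (A ((\<theta>2 - x) + x) - A (\<theta>2 - x)) - (A (\<theta>1 + x) - A \<theta>1)"
      by (rule ftc_real(1)[OF x(2) d])
    show "(\<lambda>u. \<beta> (u + x) - \<beta> u) integrable_on {\<theta>1..\<theta>2 - x}" by (rule ftc_real(2)[OF x(2) d])
  qed
  have "integral {\<theta>1..\<theta>2 - x} (\<lambda>u. (\<beta> (u + x) - \<beta> u) / 2) \<le> integral {\<theta>1..\<theta>2 - x} (\<lambda>u. sin (\<beta> (u + x) - \<beta> u))"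
  proof (rule integral_le[OF _ S_int])
    show "(\<lambda>u. (\<beta> (u + x) - \<beta> u) / 2) integrable_on {\<theta>1..\<theta>2 - x}"
      using has_integral_divide[OF integrable_integral[OF ft(2)]] integrable_on_def by blast
  qed (use S_props B in auto)
  moreover have "integral {\<theta>1..\<theta>2 - x} (\<lambda>u. (\<beta> (u + x) - \<beta> u) / 2) = integral {\<theta>1..\<theta>2 - x} (\<lambda>u. \<beta> (u + x) - \<beta> u) / 2"
    by (rule Henstock_Kurzweil_Integration.integral_divide)
  ultimately show ?thesis using ft(1) by simp
qed

lemma T_lower:
  assumes x: "0 \<le> x" "\<theta>1 + x \<le> \<theta>2 - x"
    and A: "\<And>y. y \<ge> \<theta>1 \<Longrightarrow> (A has_real_derivative \<beta> y) (at y)"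
  shows "A \<theta>2 - A (\<theta>2 - x) - A (\<theta>1 + x) + A \<theta>1 \<ge> x * (\<beta> (\<theta>2 - x) - \<beta> (\<theta>1 + x))"
proof -
  have e1: "integral {\<theta>2 - x..\<theta>2} \<beta> = A \<theta>2 - A (\<theta>2 - x)" "\<beta> integrable_on {\<theta>2 - x..\<theta>2}"
    using ftc_real[of "\<theta>2 - x" \<theta>2 A \<beta>] x A by auto
  have e2: "integral {\<theta>1..\<theta>1 + x} \<beta> = A (\<theta>1 + x) - A \<theta>1" "\<beta> integrable_on {\<theta>1..\<theta>1 + x}"
    using ftc_real[of \<theta>1 "\<theta>1 + x" A \<beta>] x A by auto
  have "integral {\<theta>2 - x..\<theta>2} (\<lambda>u. \<beta> (\<theta>2 - x)) \<le> integral {\<theta>2 - x..\<theta>2} \<beta>"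
    by (rule integral_le[OF _ e1(2)]) (auto intro: bmono_le)
  moreover have "integral {\<theta>1..\<theta>1 + x} \<beta> \<le> integral {\<theta>1..\<theta>1 + x} (\<lambda>u. \<beta> (\<theta>1 + x))"
    by (rule integral_le[OF e2(2)]) (auto intro: bmono_le)
  ultimately show ?thesis using e1(1) e2(1) x by (simp add: algebra_simps)
qed

end

context core
begin

lemma main_ordered:
  assumes \<eta>: "0 < \<eta>" "\<eta> \<le> pi/4"
    and Mb: "\<And>u y. 0 \<le> y \<Longrightarrow> y \<le> \<eta> \<Longrightarrow> \<beta> (u + y) - \<beta> u \<le> Mb" and Mb1: "Mb \<le> 1" and Mbm: "Mb \<le> m2 / 8"
    and m1: "\<And>u. m1 \<le> \<beta> (u + \<eta>/3) - \<beta> u" and m2: "\<And>u. m2 \<le> \<beta> (u + pi/4) - \<beta> u"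
    and m0: "0 < m1" "0 < m2"
    and MP: "\<And>u. \<beta> (u + pi) - \<beta> u \<le> MP" and MP0: "0 < MP"
    and t: "\<theta>1 < \<theta>2" "\<theta>2 \<le> \<theta>1 + pi"
  shows "min (1/2) (min m1 m2 * \<eta>^2 / (36 * pi^2 * MP)) * integral ({\<theta>1..\<theta>2} \<times> {\<theta>1..\<theta>2}) (\<lambda>(s, t). \<bar>\<beta> t - \<beta> s\<bar>)
     \<le> integral ({0..2*pi} \<times> {0..2*pi}) (Gi \<eta> \<theta>1 \<theta>2)"
proof -
  define d where "d = \<theta>2 - \<theta>1"
  define c where "c = min (1/2) (min m1 m2 * \<eta>^2 / (36 * pi^2 * MP))"
  define Lam where "Lam = integral ({\<theta>1..\<theta>2} \<times> {\<theta>1..\<theta>2}) (\<lambda>(s, t). \<bar>\<beta> t - \<beta> s\<bar>)"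
  define DB where "DB = integral ({0..2*pi} \<times> {0..2*pi}) (Gi \<eta> \<theta>1 \<theta>2)"
  define P where "P x = integral {\<theta>1..\<theta>2 - x} (\<lambda>u. sin (\<beta> (u + x) - \<beta> u))" for x
  have d: "0 < d" "d \<le> pi" unfolding d_def using t by auto
  have pi4: "pi/4 < pi/2" "0 < pi" using pi_gt_zero by auto
  have Bd: "0 \<le> \<beta> (u + y) - \<beta> u \<and> \<beta> (u + y) - \<beta> u \<le> 1" if "0 \<le> y" "y \<le> \<eta>" for u y
    using Mb[OF that, of u] Mb1 bmono_le[of u "u + y"] that by auto
  have monod: "\<beta> v - \<beta> u \<ge> \<beta> (u + \<delta>) - \<beta> u" if "u + \<delta> \<le> v" for u v \<delta>
    using bmono_le[OF that] by simp
  have icb: "isCont \<beta> x" for x using bcont continuous_on_eq_continuous_at by blast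
  obtain A where A0: "\<forall>x > \<theta>1 - 1. (A has_real_derivative \<beta> x) (at x)"
    using antideriv[of "\<theta>1 - 1" \<beta>] icb by blast
  have icA: "isCont A x" if "\<theta>1 - 1/2 \<le> x" for x using A0 that DERIV_isCont by force
  obtain C where C0: "\<forall>x > \<theta>1 - 1/2. (C has_real_derivative A x) (at x)"
    using antideriv[of "\<theta>1 - 1/2" A] icA by blast
  have A: "(A has_real_derivative \<beta> y) (at y)" if "y \<ge> \<theta>1" for y using A0 that by auto
  have C: "(C has_real_derivative A y) (at y)" if "y \<ge> \<theta>1" for y using C0 that by auto
  have Lamf: "Lam = 2 * d * (A \<theta>1 + A \<theta>2) - 4 * (C \<theta>2 - C \<theta>1)"
    unfolding Lam_def d_def by (rule Lam_formula[OF t(1) A C])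
  have Lam0: "0 \<le> Lam"
  proof -
    have S: "{\<theta>1..\<theta>2} \<times> {\<theta>1..\<theta>2} = cbox (\<theta>1, \<theta>1) (\<theta>2, \<theta>2)" by (simp add: cbox_Pair_eq)
    have cg: "continuous_on (cbox (\<theta>1, \<theta>1) (\<theta>2, \<theta>2)) (\<lambda>(s, t). \<bar>\<beta> t - \<beta> s\<bar>)"
      unfolding case_prod_unfold by (intro continuous_intros continuous_on_compose2[OF bcont]) auto
    show ?thesis unfolding Lam_def S
      by (rule integral_nonneg[OF integrable_continuous[OF cg]]) auto
  qed
  have DBf: "DB = 2 * integral {0..\<eta>} (J \<theta>1 \<theta>2)"
    unfolding DB_def DeltaB_reduce using R6[of \<eta> \<theta>1 \<theta>2] \<eta> by simp
  have Jint: "J \<theta>1 \<theta>2 integrable_on {a..b}" if "a \<le> b" for a b using J_integrable that by blast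
  have Jlow: "J \<theta>1 \<theta>2 x \<ge> P x - (if pi - d \<le> x then 2 * x * Mb else 0)" if "0 < x" "x \<le> \<eta>" for x
    unfolding P_def d_def by (rule J_lower[OF t that(1)]) (use that \<eta> pi4 Bd Mb Mb1 in \<open>auto\<close>)
  define T where "T x = A \<theta>2 - A (\<theta>2 - x) - A (\<theta>1 + x) + A \<theta>1" for x
  have Phalf: "P x \<ge> T x / 2" if "0 \<le> x" "x \<le> d" "x \<le> \<eta>" for x
    unfolding P_def T_def by (rule P_half) (use that Bd A d_def in auto)
  have Tlow: "T x \<ge> x * (\<beta> (\<theta>2 - x) - \<beta> (\<theta>1 + x))" if "0 \<le> x" "2 * x \<le> d" for x
    unfolding T_def by (rule T_lower) (use that A d_def in auto)
  have Pnn: "P x \<ge> 0" if "0 \<le> x" "x \<le> \<eta>" for x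
    unfolding P_def by (rule P_nonneg) (use Bd that in auto)
  have negcase: "J \<theta>1 \<theta>2 x \<ge> x * m2 / 4" if "0 < x" "x \<le> \<eta>" "pi - d \<le> x" for x
  proof -
    have "2 * x \<le> d" using that \<eta> d by linarith
    have "d - 2 * x \<ge> pi/4" using that \<eta> by linarith
    then have "\<beta> (\<theta>2 - x) - \<beta> (\<theta>1 + x) \<ge> m2"
      using monod[of "\<theta>1 + x" "pi/4" "\<theta>2 - x"] m2[of "\<theta>1 + x"] unfolding d_def by linarith
    then have "T x \<ge> x * m2" using Tlow[of x] \<open>2 * x \<le> d\<close> that
      by (meson mult_left_mono less_imp_le order_trans)
    moreover have "P x \<ge> T x / 2" using Phalf[of x] that \<open>2 * x \<le> d\<close> by simp
    moreover have "J \<theta>1 \<theta>2 x \<ge> P x - 2 * x * Mb" using Jlow[of x] that by simp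
    moreover have "2 * x * Mb \<le> 2 * x * (m2 / 8)" using Mbm that by simp
    ultimately show ?thesis by (simp add: field_simps)
  qed
  show ?thesis
  proof (cases "d \<le> \<eta>")
    case True
    have J1: "J \<theta>1 \<theta>2 x \<ge> 0" if "x \<in> {d..\<eta>}" for x
    proof -
      have "\<not> pi - d \<le> x" using that True \<eta> pi4 by auto
      then show ?thesis using Jlow[of x] Pnn[of x] that d by auto
    qed
    have J2: "J \<theta>1 \<theta>2 x \<ge> T x / 2" if "x \<in> {0..d}" for x
    proof (cases "x = 0")
      case True then show ?thesis by (simp add: J0 T_def)
    next
      case False
      then have "0 < x" using that by auto
      have "\<not> pi - d \<le> x" using that True \<eta> pi4 by auto
      then show ?thesis using Jlow[of x] Phalf[of x] that True \<open>0 < x\<close> by auto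
    qed
    have Tf: "integral {0..d} T = d * (A \<theta>1 + A \<theta>2) - 2 * (C \<theta>2 - C \<theta>1)" "T integrable_on {0..d}"
    proof -
      have der: "((\<lambda>x. x * (A \<theta>1 + A \<theta>2) + C (\<theta>2 - x) - C (\<theta>1 + x)) has_real_derivative T x) (at x)"
        if "x \<in> {0..d}" for x
      proof -
        have a: "((\<lambda>z. C (\<theta>2 - z)) has_real_derivative - A (\<theta>2 - x)) (at x)"
          by (rule deriv_shift_sub, rule C) (use that d_def in auto)
        have b: "((\<lambda>z. C (z + \<theta>1)) has_real_derivative A (x + \<theta>1)) (at x)"
          by (rule deriv_shift_add, rule C) (use that in auto)
        have b': "((\<lambda>z. C (\<theta>1 + z)) has_real_derivative A (\<theta>1 + x)) (at x)"
          using b by (simp add: add.commute)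
        show ?thesis unfolding T_def
          using DERIV_add[OF DERIV_add[OF DERIV_cmult_right[OF DERIV_ident, of "A \<theta>1 + A \<theta>2"] a] DERIV_minus[OF b']]
          by (simp add: algebra_simps)
      qed
      have "integral {0..d} T = (d * (A \<theta>1 + A \<theta>2) + C (\<theta>2 - d) - C (\<theta>1 + d)) - (0 * (A \<theta>1 + A \<theta>2) + C (\<theta>2 - 0) - C (\<theta>1 + 0))"
        by (rule ftc_real(1)) (use d der in auto)
      moreover have "\<theta>2 - d = \<theta>1" "\<theta>1 + d = \<theta>2" unfolding d_def by simp_all
      ultimately show "integral {0..d} T = d * (A \<theta>1 + A \<theta>2) - 2 * (C \<theta>2 - C \<theta>1)" by simp
      show "T integrable_on {0..d}" using ftc_real(2)[OF _ der] d by simp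
    qed
    have "integral {0..\<eta>} (J \<theta>1 \<theta>2) = integral {0..d} (J \<theta>1 \<theta>2) + integral {d..\<eta>} (J \<theta>1 \<theta>2)"
      using Henstock_Kurzweil_Integration.integral_combine[where a=0 and c=d and b=\<eta> and f="J \<theta>1 \<theta>2"] True d Jint[of 0 \<eta>] \<eta>
      by simp
    moreover have "integral {d..\<eta>} (J \<theta>1 \<theta>2) \<ge> 0"
      by (rule integral_nonneg[OF Jint]) (use True J1 in auto)
    moreover have "integral {0..d} (J \<theta>1 \<theta>2) \<ge> integral {0..d} (\<lambda>x. T x / 2)"
    proof (rule integral_le[OF _ Jint])
      show "(\<lambda>x. T x / 2) integrable_on {0..d}"
        using has_integral_divide[OF integrable_integral[OF Tf(2)]] integrable_on_def by blast
    qed (use J2 d in auto)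
    moreover have "integral {0..d} (\<lambda>x. T x / 2) = Lam / 4"
      using Tf(1) Lamf by (simp add: Henstock_Kurzweil_Integration.integral_divide algebra_simps)
    ultimately have "DB \<ge> Lam / 2" using DBf by simp
    moreover have "c * Lam \<le> Lam / 2" unfolding c_def using Lam0
      by (metis min.cobounded1 mult_right_mono mult.commute divide_inverse mult_1)
    ultimately show ?thesis unfolding c_def Lam_def DB_def by linarith
  next
    case False
    define mm where "mm = min m1 m2"
    have mm0: "0 < mm" using m0 unfolding mm_def by simp
    have J1: "J \<theta>1 \<theta>2 x \<ge> 0" if "x \<in> {\<eta>/3..\<eta>}" for x
    proof (cases "pi - d \<le> x")
      case True
      have "0 < x" using that \<eta> by auto
      then have "0 \<le> x * m2 / 4" using m0 by simp
      then show ?thesis using negcase[of x] that True \<open>0 < x\<close> by auto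
    next
      case F: False
      have "0 < x" using that \<eta> by auto
      then show ?thesis using Jlow[of x] Pnn[of x] that F by auto
    qed
    have J2: "J \<theta>1 \<theta>2 x \<ge> mm / 4 * x" if "x \<in> {0..\<eta>/3}" for x
    proof (cases "x = 0")
      case True then show ?thesis by (simp add: J0)
    next
      case nz: False
      then have x0: "0 < x" using that by auto
      show ?thesis
      proof (cases "pi - d \<le> x")
        case True
        have h: "x * mm \<le> x * m2" using x0 unfolding mm_def by simp
        have j: "J \<theta>1 \<theta>2 x \<ge> x * m2 / 4" using negcase[of x] x0 that True \<eta> by auto
        have e: "mm / 4 * x = (x * mm) / 4" by simp
        show ?thesis unfolding e using h j by linarith
      next
        case F: False
        have "2 * x \<le> d" "x \<le> d" using that False \<eta> by auto
        have "d - 2 * x \<ge> \<eta>/3" using that False by auto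
        then have "\<beta> (\<theta>2 - x) - \<beta> (\<theta>1 + x) \<ge> m1"
          using monod[of "\<theta>1 + x" "\<eta>/3" "\<theta>2 - x"] m1[of "\<theta>1 + x"] unfolding d_def by linarith
        then have "T x \<ge> x * m1" using Tlow[of x] \<open>2 * x \<le> d\<close> x0
          by (meson mult_left_mono less_imp_le order_trans)
        moreover have "P x \<ge> T x / 2" using Phalf[of x] x0 \<open>x \<le> d\<close> that \<eta> by simp
        moreover have "J \<theta>1 \<theta>2 x \<ge> P x" using Jlow[of x] x0 that F \<eta> by simp
        moreover have "x * mm \<le> x * m1" using x0 unfolding mm_def by simp
        moreover have "0 \<le> x * mm" using x0 mm0 by simp
        moreover have e: "mm / 4 * x = (x * mm) / 4" by simp
        ultimately show ?thesis unfolding e by linarith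
      qed
    qed
    have lin: "integral {0..\<eta>/3} (\<lambda>x. mm / 4 * x) = mm * \<eta>^2 / 72" "(\<lambda>x. mm / 4 * x) integrable_on {0..\<eta>/3}"
    proof -
      have der: "((\<lambda>x. mm / 8 * x^2) has_real_derivative mm / 4 * x) (at x)" for x
        by (auto intro!: derivative_eq_intros simp: field_simps)
      show "integral {0..\<eta>/3} (\<lambda>x. mm / 4 * x) = mm * \<eta>^2 / 72"
        using ftc_real(1)[OF _ der, of 0 "\<eta>/3"] \<eta> by (simp add: power2_eq_square field_simps)
      show "(\<lambda>x. mm / 4 * x) integrable_on {0..\<eta>/3}" using ftc_real(2)[OF _ der, of 0 "\<eta>/3"] \<eta> by simp
    qed
    have "integral {0..\<eta>} (J \<theta>1 \<theta>2) = integral {0..\<eta>/3} (J \<theta>1 \<theta>2) + integral {\<eta>/3..\<eta>} (J \<theta>1 \<theta>2)"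
      using Henstock_Kurzweil_Integration.integral_combine[where a=0 and c="\<eta>/3" and b=\<eta> and f="J \<theta>1 \<theta>2"] Jint[of 0 \<eta>] \<eta>
      by simp
    moreover have "integral {\<eta>/3..\<eta>} (J \<theta>1 \<theta>2) \<ge> 0"
      by (rule integral_nonneg[OF Jint]) (use \<eta> J1 in auto)
    moreover have "integral {0..\<eta>/3} (J \<theta>1 \<theta>2) \<ge> integral {0..\<eta>/3} (\<lambda>x. mm / 4 * x)"
      by (rule integral_le[OF lin(2) Jint]) (use J2 \<eta> in auto)
    ultimately have DBl: "DB \<ge> mm * \<eta>^2 / 36" using DBf lin(1) by linarith
    have Lb: "Lam \<le> pi^2 * MP"
    proof -
      have S: "{\<theta>1..\<theta>2} \<times> {\<theta>1..\<theta>2} = cbox (\<theta>1, \<theta>1) (\<theta>2, \<theta>2)" by (simp add: cbox_Pair_eq)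
      have cg: "continuous_on (cbox (\<theta>1, \<theta>1) (\<theta>2, \<theta>2)) (\<lambda>(s, t). \<bar>\<beta> t - \<beta> s\<bar>)"
        unfolding case_prod_unfold by (intro continuous_intros continuous_on_compose2[OF bcont]) auto
      have bnd: "norm ((\<lambda>(s, t). \<bar>\<beta> t - \<beta> s\<bar>) p) \<le> \<beta> \<theta>2 - \<beta> \<theta>1" if "p \<in> cbox (\<theta>1, \<theta>1) (\<theta>2, \<theta>2)" for p
      proof -
        obtain s u where p: "p = (s, u)" by (cases p)
        have "s \<in> {\<theta>1..\<theta>2}" "u \<in> {\<theta>1..\<theta>2}" using that p by (auto simp: cbox_Pair_eq)
        then show ?thesis using p bmono_le[of \<theta>1 s] bmono_le[of s \<theta>2] bmono_le[of \<theta>1 u] bmono_le[of u \<theta>2] by auto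
      qed
      have B0: "0 \<le> \<beta> \<theta>2 - \<beta> \<theta>1" using bmono_le[of \<theta>1 \<theta>2] t by simp
      have "norm Lam \<le> (\<beta> \<theta>2 - \<beta> \<theta>1) * measure lborel (cbox (\<theta>1, \<theta>1) (\<theta>2, \<theta>2))"
        unfolding Lam_def S by (rule has_integral_bound[OF B0 integrable_integral[OF integrable_continuous[OF cg]] bnd])
      moreover have "measure lborel (cbox (\<theta>1, \<theta>1) (\<theta>2, \<theta>2)) = d * d"
        using content_Pair[of \<theta>1 \<theta>1 \<theta>2 \<theta>2] t unfolding d_def by simp
      moreover have "\<beta> \<theta>2 - \<beta> \<theta>1 \<le> MP" using MP[of \<theta>1] bmono_le[of \<theta>2 "\<theta>1 + pi"] t by simp
      moreover have "d * d \<le> pi^2" using d by (simp add: power2_eq_square mult_mono)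
      ultimately have "Lam \<le> MP * pi^2" using B0 d
        by (smt (verit, best) mult_mono mult_nonneg_nonneg real_norm_def zero_le_mult_iff)
      then show ?thesis by (simp add: mult.commute)
    qed
    have c0: "0 \<le> c" unfolding c_def using mm0 MP0 by (simp add: mm_def)
    have "c * Lam \<le> c * (pi^2 * MP)" using Lb c0 by (rule mult_left_mono)
    also have "\<dots> \<le> (mm * \<eta>^2 / (36 * pi^2 * MP)) * (pi^2 * MP)"
      by (rule mult_right_mono) (use MP0 in \<open>auto simp: c_def mm_def\<close>)
    also have "\<dots> = mm * \<eta>^2 / 36" using MP0 by (simp add: field_simps)
    finally show ?thesis using DBl unfolding c_def Lam_def DB_def mm_def by linarith
  qed
qed

end

lemma fS_swap: "fS \<theta>2 \<theta>1 s = - fS \<theta>1 \<theta>2 s" unfolding fS_def by simp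
lemma fS_same: "fS \<theta> \<theta> s = 0" unfolding fS_def by simp

context core
begin

lemma Gi_swap: "Gi \<eta> \<theta>2 \<theta>1 = Gi \<eta> \<theta>1 \<theta>2"
proof (rule ext)
  fix p show "Gi \<eta> \<theta>2 \<theta>1 p = Gi \<eta> \<theta>1 \<theta>2 p"
    unfolding Gi_def fS_swap[of \<theta>2 \<theta>1] by (simp only: mult_minus_right mult_minus_left minus_minus)
qed

theorem core_main:
  "\<exists>\<eta> c. 0 < \<eta> \<and> \<eta> \<le> pi/4 \<and> 0 < c \<and> (\<forall>\<theta>1 \<theta>2. \<bar>\<theta>1 - \<theta>2\<bar> \<le> pi \<longrightarrow>
     c * integral ({min \<theta>1 \<theta>2..max \<theta>1 \<theta>2} \<times> {min \<theta>1 \<theta>2..max \<theta>1 \<theta>2}) (\<lambda>(s, t). \<bar>\<beta> t - \<beta> s\<bar>)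
       \<le> integral ({0..2*pi} \<times> {0..2*pi}) (Gi \<eta> \<theta>1 \<theta>2))"
proof -
  obtain m2 X where m2: "0 < m2" "\<And>u. m2 \<le> \<beta> (u + pi/4) - \<beta> u"
    using incr_bounds[of "pi/4"] by auto
  obtain Y MP where MP: "\<And>u. \<beta> (u + pi) - \<beta> u \<le> MP"
    using incr_bounds[of pi] pi_gt_zero by blast
  have MP0: "0 < MP" using MP[of 0] bmono_lt[of 0 pi] pi_gt_zero by simp
  have e0: "0 < min 1 (m2/8)" using m2 by simp
  obtain d0 where d0: "d0 > 0" "\<And>u y. 0 \<le> y \<and> y \<le> d0 \<longrightarrow> \<beta> (u + y) - \<beta> u \<le> min 1 (m2/8)"
    using incr_small[OF e0] by blast
  define \<eta> where "\<eta> = min d0 (pi/4)"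
  define Mb where "Mb = min 1 (m2/8)"
  have \<eta>: "0 < \<eta>" "\<eta> \<le> pi/4" unfolding \<eta>_def using d0 pi_gt_zero by auto
  have Mb: "\<beta> (u + y) - \<beta> u \<le> Mb" if "0 \<le> y" "y \<le> \<eta>" for u y
    using d0(2)[of y u] that unfolding \<eta>_def Mb_def by auto
  obtain m1 Z where m1: "0 < m1" "\<And>u. m1 \<le> \<beta> (u + \<eta>/3) - \<beta> u"
    using incr_bounds[of "\<eta>/3"] \<eta> by auto
  define c where "c = min (1/2) (min m1 m2 * \<eta>^2 / (36 * pi^2 * MP))"
  have c0: "0 < c" unfolding c_def using m1 m2 MP0 \<eta> by simp
  have main: "c * integral ({\<theta>1..\<theta>2} \<times> {\<theta>1..\<theta>2}) (\<lambda>(s, t). \<bar>\<beta> t - \<beta> s\<bar>)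
     \<le> integral ({0..2*pi} \<times> {0..2*pi}) (Gi \<eta> \<theta>1 \<theta>2)" if "\<theta>1 < \<theta>2" "\<theta>2 \<le> \<theta>1 + pi" for \<theta>1 \<theta>2
    unfolding c_def
    by (rule main_ordered[OF \<eta> Mb _ _ m1(2) m2(2) m1(1) m2(1) MP MP0 that]) (auto simp: Mb_def)
  have all: "c * integral ({min \<theta>1 \<theta>2..max \<theta>1 \<theta>2} \<times> {min \<theta>1 \<theta>2..max \<theta>1 \<theta>2}) (\<lambda>(s, t). \<bar>\<beta> t - \<beta> s\<bar>)
       \<le> integral ({0..2*pi} \<times> {0..2*pi}) (Gi \<eta> \<theta>1 \<theta>2)" if "\<bar>\<theta>1 - \<theta>2\<bar> \<le> pi" for \<theta>1 \<theta>2
  proof (cases \<theta>1 \<theta>2 rule: linorder_cases)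
    case less
    have mm: "min \<theta>1 \<theta>2 = \<theta>1" "max \<theta>1 \<theta>2 = \<theta>2" using less by auto
    show ?thesis unfolding mm using main[of \<theta>1 \<theta>2] that less by simp
  next
    case greater
    have mm: "min \<theta>1 \<theta>2 = \<theta>2" "max \<theta>1 \<theta>2 = \<theta>1" using greater by auto
    show ?thesis unfolding mm Gi_swap[of \<eta> \<theta>2 \<theta>1, symmetric] using main[of \<theta>2 \<theta>1] that greater by simp
  next
    case equal
    have "Gi \<eta> \<theta>1 \<theta>2 p = 0" for p unfolding Gi_def using equal fS_same[of \<theta>2] by simp
    then have g0: "Gi \<eta> \<theta>1 \<theta>2 = (\<lambda>p. 0)" by (rule ext)
    have l0: "integral ({\<theta>1..\<theta>2} \<times> {\<theta>1..\<theta>2}) (\<lambda>(s, t). \<bar>\<beta> t - \<beta> s\<bar>) = 0"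
    proof -
      have e: "{\<theta>1..\<theta>2} \<times> {\<theta>1..\<theta>2} = cbox (\<theta>1, \<theta>1) (\<theta>2, \<theta>2)" by (simp add: cbox_Pair_eq)
      have "Henstock_Kurzweil_Integration.content (cbox (\<theta>1, \<theta>1) (\<theta>2, \<theta>2)) = 0"
        unfolding content_Pair using equal by simp
      then show ?thesis unfolding e by (rule integral_null)
    qed
    have mm: "min \<theta>1 \<theta>2 = \<theta>1" "max \<theta>1 \<theta>2 = \<theta>2" using equal by auto
    show ?thesis unfolding mm l0 g0 by simp
  qed
  have allf: "\<forall>\<theta>1 \<theta>2. \<bar>\<theta>1 - \<theta>2\<bar> \<le> pi \<longrightarrow> c * integral ({min \<theta>1 \<theta>2..max \<theta>1 \<theta>2} \<times> {min \<theta>1 \<theta>2..max \<theta>1 \<theta>2}) (\<lambda>(s, t). \<bar>\<beta> t - \<beta> s\<bar>)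
       \<le> integral ({0..2*pi} \<times> {0..2*pi}) (Gi \<eta> \<theta>1 \<theta>2)"
    by (intro allI impI) (rule all)
  have A: "0 < \<eta> \<and> \<eta> \<le> pi/4 \<and> 0 < c \<and> (\<forall>\<theta>1 \<theta>2. \<bar>\<theta>1 - \<theta>2\<bar> \<le> pi \<longrightarrow> c * integral ({min \<theta>1 \<theta>2..max \<theta>1 \<theta>2} \<times> {min \<theta>1 \<theta>2..max \<theta>1 \<theta>2}) (\<lambda>(s, t). \<bar>\<beta> t - \<beta> s\<bar>)
       \<le> integral ({0..2*pi} \<times> {0..2*pi}) (Gi \<eta> \<theta>1 \<theta>2))"
    by (intro conjI \<eta>(1) \<eta>(2) c0 allf)
  show ?thesis by (rule exI[of _ \<eta>], rule exI[of _ c], rule A)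
qed

end


lemma mono_var:
  fixes h :: "real \<Rightarrow> real"
  assumes "mono h" "\<forall>i<n. x i \<le> x (Suc i)"
  shows "(\<Sum>i<n. \<bar>h (x (Suc i)) - h (x i)\<bar>) = h (x n) - h (x 0)"
proof -
  have "(\<Sum>i<n. \<bar>h (x (Suc i)) - h (x i)\<bar>) = (\<Sum>i<n. h (x (Suc i)) - h (x i))"
    using assms by (intro sum.cong) (auto simp: mono_def)
  also have "\<dots> = h (x n) - h (x 0)" by (rule sum_lessThan_telescope)
  finally show ?thesis .
qed

lemma phi0_decomp:
  assumes "0 < \<eta>" "\<eta> \<le> pi/4" "0 \<le> x" "x \<le> 2*pi"
  shows "phi0 \<eta> x = (if 0 < x then 1 else 0) - (if \<eta> \<le> x then 1 else 0) - (if 2*pi - \<eta> < x then 1 else 0) + (if 2*pi \<le> x then 1 else 0)"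
proof -
  consider "x = 0" | "0 < x \<and> x < \<eta>" | "\<eta> \<le> x \<and> x \<le> pi" | "pi \<le> x \<and> x \<le> 2*pi - \<eta>" | "2*pi - \<eta> < x \<and> x < 2*pi" | "x = 2*pi"
    using assms by linarith
  then show ?thesis
  proof cases
    case 1 then show ?thesis using assms by (simp add: phi0_def)
  next
    case 2 then show ?thesis using phi0_pos[of x \<eta>] assms by auto
  next
    case 3 then show ?thesis using phi0_zero[of \<eta> x] assms by auto
  next
    case 4
    have "phi0 \<eta> (- x) = 0"
    proof -
      have "phi0 \<eta> (- x) = phi0 \<eta> (- x + 2*pi)" using phi0_per[of \<eta> "-x"] by simp
      also have "\<dots> = 0" using phi0_zero[of \<eta> "- x + 2*pi"] 4 assms by auto
      finally show ?thesis .
    qed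
    then have "phi0 \<eta> x = 0" using phi0_odd[of \<eta> x] by simp
    then show ?thesis using 4 assms by auto
  next
    case 5
    have "phi0 \<eta> (2*pi - x) = 1" using phi0_pos[of "2*pi - x" \<eta>] 5 assms by auto
    moreover have "phi0 \<eta> (2*pi - x) = phi0 \<eta> (- x)" using phi0_per[of \<eta> "-x"] by simp
    ultimately have "phi0 \<eta> x = -1" using phi0_odd[of \<eta> x] by simp
    then show ?thesis using 5 assms by auto
  next
    case 6 then show ?thesis using assms by (simp add: phi0_def)
  qed
qed

lemma abs4: "\<bar>a - b - c + d\<bar> \<le> \<bar>a\<bar> + \<bar>b\<bar> + \<bar>c\<bar> + (\<bar>d\<bar>::real)"
proof -
  have "\<bar>a - b - c + d\<bar> \<le> \<bar>a - b - c\<bar> + \<bar>d\<bar>" by (rule abs_triangle_ineq)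
  moreover have "\<bar>a - b - c\<bar> \<le> \<bar>a - b\<bar> + \<bar>c\<bar>" by (rule abs_triangle_ineq4)
  moreover have "\<bar>a - b\<bar> \<le> \<bar>a\<bar> + \<bar>b\<bar>" by (rule abs_triangle_ineq4)
  ultimately show ?thesis by linarith
qed

lemma phi0_bv:
  assumes "0 < \<eta>" "\<eta> \<le> pi/4" "\<bar>e\<bar> = 1"
  shows "bv_on (\<lambda>x. e * phi0 \<eta> x) 0 (2*pi)"
  unfolding bv_on_def
proof (intro exI[of _ 4] allI impI)
  fix n :: nat and x :: "nat \<Rightarrow> real"
  assume a: "(\<forall>i\<le>n. 0 \<le> x i \<and> x i \<le> 2*pi) \<and> (\<forall>i<n. x i \<le> x (Suc i))"
  define h1 where "h1 y = (if 0 < y then 1 else (0::real))" for y :: real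
  define h2 where "h2 y = (if \<eta> \<le> y then 1 else (0::real))" for y :: real
  define h3 where "h3 y = (if 2*pi - \<eta> < y then 1 else (0::real))" for y :: real
  define h4 where "h4 y = (if 2*pi \<le> y then 1 else (0::real))" for y :: real
  have mono: "mono h1" "mono h2" "mono h3" "mono h4" unfolding h1_def h2_def h3_def h4_def mono_def by auto
  have b01: "h y \<le> 1" "0 \<le> h y" if "h \<in> {h1, h2, h3, h4}" for h y
    using that unfolding h1_def h2_def h3_def h4_def by auto
  have dec: "e * phi0 \<eta> (x i) = e * (h1 (x i) - h2 (x i) - h3 (x i) + h4 (x i))" if "i \<le> n" for i
    using phi0_decomp[of \<eta> "x i"] assms a that unfolding h1_def h2_def h3_def h4_def by auto
  have "(\<Sum>i<n. \<bar>e * phi0 \<eta> (x (Suc i)) - e * phi0 \<eta> (x i)\<bar>)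
     \<le> (\<Sum>i<n. \<bar>h1 (x (Suc i)) - h1 (x i)\<bar> + \<bar>h2 (x (Suc i)) - h2 (x i)\<bar> + \<bar>h3 (x (Suc i)) - h3 (x i)\<bar> + \<bar>h4 (x (Suc i)) - h4 (x i)\<bar>)"
  proof (rule sum_mono)
    fix i assume "i \<in> {..<n}"
    then have "i \<le> n" "Suc i \<le> n" by auto
    have "e * phi0 \<eta> (x (Suc i)) - e * phi0 \<eta> (x i) =
      e * ((h1 (x (Suc i)) - h1 (x i)) - (h2 (x (Suc i)) - h2 (x i)) - (h3 (x (Suc i)) - h3 (x i)) + (h4 (x (Suc i)) - h4 (x i)))"
      unfolding dec[OF \<open>i \<le> n\<close>] dec[OF \<open>Suc i \<le> n\<close>] by (simp add: algebra_simps)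
    then have "\<bar>e * phi0 \<eta> (x (Suc i)) - e * phi0 \<eta> (x i)\<bar> =
      \<bar>(h1 (x (Suc i)) - h1 (x i)) - (h2 (x (Suc i)) - h2 (x i)) - (h3 (x (Suc i)) - h3 (x i)) + (h4 (x (Suc i)) - h4 (x i))\<bar>"
      using assms(3) by (simp only: abs_mult mult_1)
    also have "\<dots> \<le> \<bar>h1 (x (Suc i)) - h1 (x i)\<bar> + \<bar>h2 (x (Suc i)) - h2 (x i)\<bar> + \<bar>h3 (x (Suc i)) - h3 (x i)\<bar> + \<bar>h4 (x (Suc i)) - h4 (x i)\<bar>"
      by (rule abs4)
    finally show "\<bar>e * phi0 \<eta> (x (Suc i)) - e * phi0 \<eta> (x i)\<bar> \<le> \<dots>" .
  qed
  also have "\<dots> = (h1 (x n) - h1 (x 0)) + (h2 (x n) - h2 (x 0)) + (h3 (x n) - h3 (x 0)) + (h4 (x n) - h4 (x 0))"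
  proof -
    have incr: "\<forall>i<n. x i \<le> x (Suc i)" using a by blast
    note s1 = mono_var[OF mono(1) incr] and s2 = mono_var[OF mono(2) incr]
      and s3 = mono_var[OF mono(3) incr] and s4 = mono_var[OF mono(4) incr]
    show ?thesis by (simp only: sum.distrib s1 s2 s3 s4)
  qed
  also have "\<dots> \<le> 4"
  proof -
    have "h1 (x n) \<le> 1" "0 \<le> h1 (x 0)" "h2 (x n) \<le> 1" "0 \<le> h2 (x 0)"
         "h3 (x n) \<le> 1" "0 \<le> h3 (x 0)" "h4 (x n) \<le> 1" "0 \<le> h4 (x 0)"
      using b01 by auto
    then show ?thesis by linarith
  qed
  finally show "(\<Sum>i<n. \<bar>e * phi0 \<eta> (x (Suc i)) - e * phi0 \<eta> (x i)\<bar>) \<le> 4" .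
qed


lemma wedge_cis: "wedge (cis a) (cis b) = sin (b - a)"
  by (simp add: wedge_def sin_diff algebra_simps)

theorem lemma5p7:
  fixes N :: "complex \<Rightarrow> real" and \<gamma> :: "real \<Rightarrow> complex" and \<alpha> :: "real \<Rightarrow> real"
  assumes "is_norm2 N"
    and "strictly_convex_norm N"
    and "C1_off_origin N"
    and "\<forall>t. \<gamma> (t + 2*pi) = \<gamma> t"
    and "inj_on \<gamma> {0..<2*pi}"
    and "range \<gamma> = {z. N z = 1}"
    and "\<forall>t. (\<gamma> has_vector_derivative cis (\<alpha> t)) (at t)"
    and "continuous_on UNIV \<alpha>"
    and "winding_number (\<lambda>u. \<gamma> (2 * pi * u)) 0 = 1"
  shows "\<exists>(\<phi>::real \<Rightarrow> real) (c::real). c > 0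
     \<and> (\<forall>x. \<phi> (- x) = - \<phi> x) \<and> (\<forall>x. \<phi> (x + 2*pi) = \<phi> x) \<and> bv_on \<phi> 0 (2*pi)
     \<and> (\<forall>\<theta>1 \<theta>2. \<bar>\<theta>1 - \<theta>2\<bar> \<le> pi \<longrightarrow> Delta \<phi> \<alpha> \<theta>1 \<theta>2 \<ge> c * Lambda \<alpha> \<theta>1 \<theta>2)"
proof -
  obtain D :: "complex \<Rightarrow> (complex \<Rightarrow>\<^sub>L real)" where
    D: "\<forall>x. x \<noteq> 0 \<longrightarrow> (N has_derivative blinfun_apply (D x)) (at x)"
    using assms(3) unfolding C1_off_origin_def by blast
  interpret curve N \<gamma> \<alpha> D
    using assms D by unfold_locales auto
  obtain \<epsilon> :: real where \<epsilon>: "\<epsilon> = 1 \<or> \<epsilon> = -1" "strict_mono (\<lambda>u. \<epsilon> * \<alpha> u)"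
    using mono_alpha by blast
  obtain K where K: "\<forall>u. \<alpha> (u + 2*pi) = \<alpha> u + K" using per_incr by blast
  have "cis K = 1"
  proof -
    have a2: "\<alpha> (2*pi) = \<alpha> 0 + K" using K[rule_format, of 0] by simp
    have "cis (\<alpha> 0 + K) = cis (\<alpha> 0)" using cis_alpha_per[of 0] unfolding a2[symmetric] by simp
    then show ?thesis by (simp add: cis_mult[symmetric])
  qed
  then have "cos K = 1" by (metis cis.sel(1) one_complex.sel(1))
  then obtain k :: int where k: "K = of_int k * 2 * pi" using cos_one_2pi_int by blast
  define \<beta> where "\<beta> u = \<epsilon> * \<alpha> u" for u
  define kK where "kK = (if \<epsilon> = 1 then k else - k)"
  have ee: "\<epsilon> * \<epsilon> = 1" using \<epsilon>(1) by auto
  have ab: "\<alpha> u = \<epsilon> * \<beta> u" for u unfolding \<beta>_def using ee by (simp add: mult.assoc[symmetric])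
  have cb: "core \<beta> kK"
  proof
    show "strict_mono \<beta>" unfolding \<beta>_def[abs_def] by (rule \<epsilon>(2))
    show "continuous_on UNIV \<beta>" unfolding \<beta>_def[abs_def] by (intro continuous_intros acont)
    fix u
    show "\<beta> (u + 2*pi) = \<beta> u + 2*pi * of_int kK"
      unfolding \<beta>_def kK_def using K k \<epsilon>(1) by (auto simp: algebra_simps)
  qed
  interpret core \<beta> kK by (rule cb)
  obtain \<eta> c where \<eta>c: "0 < \<eta>" "\<eta> \<le> pi/4" "0 < c"
    "\<forall>\<theta>1 \<theta>2. \<bar>\<theta>1 - \<theta>2\<bar> \<le> pi \<longrightarrow>
     c * integral ({min \<theta>1 \<theta>2..max \<theta>1 \<theta>2} \<times> {min \<theta>1 \<theta>2..max \<theta>1 \<theta>2}) (\<lambda>(s, t). \<bar>\<beta> t - \<beta> s\<bar>)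
       \<le> integral ({0..2*pi} \<times> {0..2*pi}) (Gi \<eta> \<theta>1 \<theta>2)"
    using core_main by blast
  define \<phi> where "\<phi> x = \<epsilon> * phi0 \<eta> x" for x
  have odd: "\<forall>x. \<phi> (- x) = - \<phi> x" unfolding \<phi>_def by (simp add: phi0_odd)
  have per: "\<forall>x. \<phi> (x + 2*pi) = \<phi> x" unfolding \<phi>_def by (simp add: phi0_per)
  have bv: "bv_on \<phi> 0 (2*pi)" unfolding \<phi>_def[abs_def]
    by (rule phi0_bv) (use \<eta>c \<epsilon>(1) in auto)
  have DG: "Delta \<phi> \<alpha> \<theta>1 \<theta>2 = integral ({0..2*pi} \<times> {0..2*pi}) (Gi \<eta> \<theta>1 \<theta>2)" for \<theta>1 \<theta>2
  proof -
    have "(\<lambda>(s, t). \<phi> (t - s) * wedge (cis (\<alpha> (s - pi/2))) (cis (\<alpha> (t - pi/2)))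
        * ((if cis s \<bullet> cis \<theta>2 > 0 then 1 else 0) - (if cis s \<bullet> cis \<theta>1 > 0 then 1 else 0))
        * ((if cis t \<bullet> cis \<theta>2 > 0 then 1 else 0) - (if cis t \<bullet> cis \<theta>1 > 0 then 1 else 0))) = Gi \<eta> \<theta>1 \<theta>2"
    proof (rule ext, clarify)
      fix s t :: real
      have "sin (\<alpha> (t - pi/2) - \<alpha> (s - pi/2)) = \<epsilon> * sin (\<beta> (t - pi/2) - \<beta> (s - pi/2))"
      proof (cases "\<epsilon> = 1")
        case True then show ?thesis unfolding ab by simp
      next
        case False
        then have "\<epsilon> = -1" using \<epsilon>(1) by simp
        moreover have "sin (\<beta> (s - pi/2) - \<beta> (t - pi/2)) = - sin (\<beta> (t - pi/2) - \<beta> (s - pi/2))"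
          by (metis minus_diff_eq sin_minus)
        ultimately show ?thesis unfolding ab by simp
      qed
      then show "\<phi> (t - s) * wedge (cis (\<alpha> (s - pi/2))) (cis (\<alpha> (t - pi/2)))
        * ((if cis s \<bullet> cis \<theta>2 > 0 then 1 else 0) - (if cis s \<bullet> cis \<theta>1 > 0 then 1 else 0))
        * ((if cis t \<bullet> cis \<theta>2 > 0 then 1 else 0) - (if cis t \<bullet> cis \<theta>1 > 0 then 1 else 0)) = Gi \<eta> \<theta>1 \<theta>2 (s, t)"
      proof -
        have e2: "\<epsilon> * p * (\<epsilon> * q) = p * q" for p q :: real
        proof -
          have "\<epsilon> * p * (\<epsilon> * q) = (\<epsilon> * \<epsilon>) * (p * q)" by (simp only: mult.assoc mult.commute mult.left_commute)
          then show ?thesis using ee by simp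
        qed
        show ?thesis unfolding Gi_def \<phi>_def wedge_cis fS_def \<open>sin (\<alpha> (t - pi/2) - \<alpha> (s - pi/2)) = \<epsilon> * sin (\<beta> (t - pi/2) - \<beta> (s - pi/2))\<close>
          by (simp only: fst_conv snd_conv e2)
      qed
    qed
    then show ?thesis unfolding Delta_def by simp
  qed
  have LG: "Lambda \<alpha> \<theta>1 \<theta>2 = integral ({min \<theta>1 \<theta>2..max \<theta>1 \<theta>2} \<times> {min \<theta>1 \<theta>2..max \<theta>1 \<theta>2}) (\<lambda>(s, t). \<bar>\<beta> t - \<beta> s\<bar>)" for \<theta>1 \<theta>2
  proof -
    have "(\<lambda>(s, t). \<bar>\<alpha> t - \<alpha> s\<bar>) = (\<lambda>(s, t). \<bar>\<beta> t - \<beta> s\<bar>)"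
    proof (rule ext, clarify)
      fix s t
      have "\<bar>\<alpha> t - \<alpha> s\<bar> = \<bar>\<epsilon>\<bar> * \<bar>\<beta> t - \<beta> s\<bar>" unfolding ab by (simp add: abs_mult[symmetric] right_diff_distrib)
      then show "\<bar>\<alpha> t - \<alpha> s\<bar> = \<bar>\<beta> t - \<beta> s\<bar>" using \<epsilon>(1) by auto
    qed
    then show ?thesis unfolding Lambda_def by simp
  qed
  show ?thesis
  proof (intro exI[of _ \<phi>] exI[of _ c] conjI odd per bv allI impI)
    show "0 < c" by (rule \<eta>c(3))
    fix \<theta>1 \<theta>2 :: real assume "\<bar>\<theta>1 - \<theta>2\<bar> \<le> pi"
    then show "c * Lambda \<alpha> \<theta>1 \<theta>2 \<le> Delta \<phi> \<alpha> \<theta>1 \<theta>2"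
      unfolding DG LG using \<eta>c(4) by blast
  qed
qed


end
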